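(* Let $P$ be a tree poset of height $h\le5$ and radius at most $2$, and let $x\in P$ be such that every element of $P$ is at distance at most $2$ from $x$ in the undirected Hasse diagram of $P$. Then for every $\varepsilon>0$ and every sufficiently large $n\in\mathbb N$, every family $\mathcal F\subseteq 2^{[n]}$ with $|\mathcal F|\ge 4(h-1+\varepsilon)\binom{n}{\lfloor n/2\rfloor}$ contains a copy of the blow-up $P(x,n^{1.9})$.
   Context: Posets are finite collections of finite sets ordered by inclusion. A poset homomorphism $\phi:P\to Q$ is a map with $A\subseteq B\Rightarrow \phi(A)\subseteq\phi(B)$; $Q$ contains a copy of $P$ if there is an injective poset homomorphism $P\to Q$. The Hasse diagram of $P$ is the directed graph on $P$ with an edge $A\to B$ when $A\subsetneq B$ and no $C\in P$ has $A\subsetneq C\subsetneq B$; the undirected Hasse diagram forgets orientations. A tree poset is a poset whose undirected Hasse diagram is a tree; radius at most $t$ means some element is at distance at most $t$ from all elements in the undirected Hasse diagram. The height is the number of elements of a longest chain. For a tree poset $P$, $x\in P$ and an integer $d\ge2$, the $d$-blow-up $P(x,d)$ rooted at $x$ is the tree poset whose Hasse diagram is obtained as follows: each $u\in P$ at distance $\rho$ from $x$ is replaced by $d^{\rho}$ elements $u^1,\dots,u^{d^\rho}$; for each edge $uv$ of the Hasse diagram with $v$ at distance $\rho-1$ from $x$ (and $u$ at distance $\rho$), the $u^i$ are partitioned into $d^{\rho-1}$ disjoint sets $U^1,\dots,U^{d^{\rho-1}}$ of size $d$ and $v^j$ is joined to every element of $U^j$, with the same orientation as the edge $uv$. The parameter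 $n^{1.9}$ is rounded down to an integer. *)

theory Defs
  imports Complex_Main
begin

text \<open>Posets are finite families of finite sets ordered by inclusion.\<close>

definition hasse_edge :: "'a set set \<Rightarrow> 'a set \<Rightarrow> 'a set \<Rightarrow> bool" where
  "hasse_edge P A B \<longleftrightarrow> A \<in> P \<and> B \<in> P \<and> A \<subset> B \<and> \<not> (\<exists>C\<in>P. A \<subset> C \<and> C \<subset> B)"

definition hasse_adj :: "'a set set \<Rightarrow> ('a set \<times> 'a set) set" where
  "hasse_adj P = {(A, B). hasse_edge P A B \<or> hasse_edge P B A}"

definition hasse_uedges :: "'a set set \<Rightarrow> 'a set set set" where
  "hasse_uedges P = {{A, B} | A B. hasse_edge P A B}"

definition hdist_le :: "'a set set \<Rightarrow> 'a set \<Rightarrow> 'a set \<Rightarrow> nat \<Rightarrow> bool" where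
  "hdist_le P A B k \<longleftrightarrow> (\<exists>j\<le>k. (A, B) \<in> hasse_adj P ^^ j)"

text \<open>Distance in the undirected Hasse diagram (meaningful for connected diagrams).\<close>
definition hdist :: "'a set set \<Rightarrow> 'a set \<Rightarrow> 'a set \<Rightarrow> nat" where
  "hdist P A B = (LEAST k. (A, B) \<in> hasse_adj P ^^ k)"

definition tree_poset :: "'a set set \<Rightarrow> bool" where
  "tree_poset P \<longleftrightarrow> P \<noteq> {} \<and> (\<forall>A\<in>P. \<forall>B\<in>P. (A, B) \<in> (hasse_adj P)\<^sup>*)
     \<and> card (hasse_uedges P) + 1 = card P"

definition radius_le :: "'a set set \<Rightarrow> nat \<Rightarrow> bool" where
  "radius_le P t \<longleftrightarrow> (\<exists>c\<in>P. \<forall>y\<in>P. hdist_le P c y t)"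

definition is_chain :: "'a set set \<Rightarrow> bool" where
  "is_chain C \<longleftrightarrow> (\<forall>A\<in>C. \<forall>B\<in>C. A \<subseteq> B \<or> B \<subseteq> A)"

definition height :: "'a set set \<Rightarrow> nat" where
  "height P = Max {card C | C. C \<subseteq> P \<and> is_chain C}"

text \<open>The d-blow-up P(x,d): element u at distance rho from x is replaced by the
  copies (u,i), i < d^rho.  For a Hasse edge between u (distance rho) and v
  (distance rho-1), the copies of u are partitioned into the blocks
  U^j = {(u,i) | i div d = j}, j < d^(rho-1), each of size d, and v^j is joined to
  every element of U^j, with the orientation of the edge uv.\<close>
definition blowup_elems :: "'a set set \<Rightarrow> 'a set \<Rightarrow> nat \<Rightarrow> ('a set \<times> nat) set" where
  "blowup_elems P x d = {(u, i). u \<in> P \<and> i < d ^ hdist P x u}"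

definition blowup_edge :: "'a set set \<Rightarrow> 'a set \<Rightarrow> nat \<Rightarrow> ('a set \<times> nat) \<Rightarrow> ('a set \<times> nat) \<Rightarrow> bool" where
  "blowup_edge P x d a b \<longleftrightarrow> a \<in> blowup_elems P x d \<and> b \<in> blowup_elems P x d \<and>
     hasse_edge P (fst a) (fst b) \<and>
     ((hdist P x (fst a) = hdist P x (fst b) + 1 \<and> snd a div d = snd b) \<or>
      (hdist P x (fst b) = hdist P x (fst a) + 1 \<and> snd b div d = snd a))"

definition blowup_le :: "'a set set \<Rightarrow> 'a set \<Rightarrow> nat \<Rightarrow> (('a set \<times> nat) \<times> ('a set \<times> nat)) set" where
  "blowup_le P x d = {(a, b). blowup_edge P x d a b}\<^sup>*"

definition contains_blowup :: "'b set set \<Rightarrow> 'a set set \<Rightarrow> 'a set \<Rightarrow> nat \<Rightarrow> bool" where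
  "contains_blowup F P x d \<longleftrightarrow> (\<exists>\<phi>. inj_on \<phi> (blowup_elems P x d) \<and>
     \<phi> ` blowup_elems P x d \<subseteq> F \<and>
     (\<forall>a\<in>blowup_elems P x d. \<forall>b\<in>blowup_elems P x d.
        (a, b) \<in> blowup_le P x d \<longrightarrow> \<phi> a \<subseteq> \<phi> b))"

end

theory Submission
  imports Defs "HOL-Combinatorics.Multiset_Permutations" "HOL-Real_Asymp.Real_Asymp"
begin

lemma split_count:
  assumes S: "finite S" and AS: "A \<subseteq> S"
  shows "card {xs \<in> permutations_of_set S. set (take (card A) xs) = A \<and> Q (drop (card A) xs)}
       = fact (card A) * card {zs \<in> permutations_of_set (S - A). Q zs}"
proof -
  have fA: "finite A" using S AS finite_subset by blast
  let ?L = "{xs \<in> permutations_of_set S. set (take (card A) xs) = A \<and> Q (drop (card A) xs)}"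
  let ?R = "permutations_of_set A \<times> {zs \<in> permutations_of_set (S - A). Q zs}"
  have "?L = (\<lambda>(ys,zs). ys @ zs) ` ?R"
  proof
    show "?L \<subseteq> (\<lambda>(ys,zs). ys @ zs) ` ?R"
    proof
      fix xs assume "xs \<in> ?L"
      hence xs: "set xs = S" "distinct xs" "set (take (card A) xs) = A" "Q (drop (card A) xs)"
        by (auto simp: permutations_of_set_def)
      have d1: "distinct (take (card A) xs)" "distinct (drop (card A) xs)"
        using xs(2) by auto
      have "set (drop (card A) xs) = S - A"
      proof -
        have "set xs = set (take (card A) xs) \<union> set (drop (card A) xs)"
          by (metis append_take_drop_id set_append)
        moreover have "set (take (card A) xs) \<inter> set (drop (card A) xs) = {}"
          using xs(2) by (metis append_take_drop_id distinct_append)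
        ultimately show ?thesis using xs by blast
      qed
      hence "(take (card A) xs, drop (card A) xs) \<in> ?R"
        using xs d1 by (auto simp: permutations_of_set_def)
      moreover have "xs = (\<lambda>(ys,zs). ys @ zs) (take (card A) xs, drop (card A) xs)" by simp
      ultimately show "xs \<in> (\<lambda>(ys,zs). ys @ zs) ` ?R" by (rule rev_image_eqI)
    qed
  next
    show "(\<lambda>(ys,zs). ys @ zs) ` ?R \<subseteq> ?L"
    proof
      fix xs assume "xs \<in> (\<lambda>(ys,zs). ys @ zs) ` ?R"
      then obtain ys zs where ys: "ys \<in> permutations_of_set A" and zs: "zs \<in> permutations_of_set (S - A)" "Q zs"
        and xs: "xs = ys @ zs" by auto
      have ly: "length ys = card A" using ys length_finite_permutations_of_set by blast
      show "xs \<in> ?L" using ys zs ly AS xs by (auto simp: permutations_of_set_def)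
    qed
  qed
  moreover have "inj_on (\<lambda>(ys,zs). ys @ zs) ?R"
  proof (rule inj_onI)
    fix p q assume p: "p \<in> ?R" and q: "q \<in> ?R" and e: "(\<lambda>(ys,zs). ys @ zs) p = (\<lambda>(ys,zs). ys @ zs) q"
    obtain ys zs where p': "p = (ys,zs)" by fastforce
    obtain ys' zs' where q': "q = (ys',zs')" by fastforce
    have "length ys = card A" "length ys' = card A"
      using p q p' q' length_finite_permutations_of_set by auto
    thus "p = q" using e p' q' by simp
  qed
  ultimately have "card ?L = card ?R" by (simp add: card_image)
  also have "\<dots> = fact (card A) * card {zs \<in> permutations_of_set (S - A). Q zs}"
    using fA by (simp add: card_cartesian_product)
  finally show ?thesis .
qed

lemma prefix_count:
  assumes S: "finite S" and AS: "A \<subseteq> S"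
  shows "card {xs \<in> permutations_of_set S. set (take (card A) xs) = A}
       = fact (card A) * fact (card S - card A)"
proof -
  have "card {xs \<in> permutations_of_set S. set (take (card A) xs) = A \<and> True}
       = fact (card A) * card {zs \<in> permutations_of_set (S - A). True}"
    by (rule split_count[OF S AS])
  moreover have "card (S - A) = card S - card A"
    using S AS by (meson card_Diff_subset finite_subset)
  ultimately show ?thesis using S by simp
qed

lemma pair_count:
  assumes S: "finite S" and AB: "A \<subseteq> B" and BS: "B \<subseteq> S"
  shows "card {xs \<in> permutations_of_set S. set (take (card A) xs) = A \<and> set (take (card B) xs) = B}
       = fact (card A) * fact (card B - card A) * fact (card S - card B)"
proof -
  have fB: "finite B" using S BS finite_subset by blast
  have fA: "finite A" using fB AB finite_subset by blast
  have cAB: "card A \<le> card B" using fB AB card_mono by blast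
  have cBA: "card (B - A) = card B - card A" using fB AB by (meson card_Diff_subset finite_subset)
  have eq: "{xs \<in> permutations_of_set S. set (take (card A) xs) = A \<and> set (take (card B) xs) = B}
     = {xs \<in> permutations_of_set S. set (take (card A) xs) = A \<and>
          (\<lambda>zs. set (take (card (B - A)) zs) = B - A) (drop (card A) xs)}"
  proof (rule Collect_cong, rule iffI)
    fix xs assume h: "xs \<in> permutations_of_set S \<and> set (take (card A) xs) = A \<and> set (take (card B) xs) = B"
    hence d: "distinct xs" by (auto simp: permutations_of_set_def)
    have "take (card B) xs = take (card A) xs @ take (card (B - A)) (drop (card A) xs)"
      using cAB cBA by (metis le_add_diff_inverse take_add)
    moreover have "set (take (card A) xs) \<inter> set (take (card (B - A)) (drop (card A) xs)) = {}"
      using d by (metis calculation distinct_append distinct_take)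
    ultimately show "xs \<in> permutations_of_set S \<and> set (take (card A) xs) = A \<and>
          (\<lambda>zs. set (take (card (B - A)) zs) = B - A) (drop (card A) xs)"
      using h by auto
  next
    fix xs assume h: "xs \<in> permutations_of_set S \<and> set (take (card A) xs) = A \<and>
          (\<lambda>zs. set (take (card (B - A)) zs) = B - A) (drop (card A) xs)"
    have "take (card B) xs = take (card A) xs @ take (card (B - A)) (drop (card A) xs)"
      using cAB cBA by (metis le_add_diff_inverse take_add)
    thus "xs \<in> permutations_of_set S \<and> set (take (card A) xs) = A \<and> set (take (card B) xs) = B"
      using h AB by auto
  qed
  have "card {zs \<in> permutations_of_set (S - A). set (take (card (B - A)) zs) = B - A}
      = fact (card (B - A)) * fact (card (S - A) - card (B - A))"
    by (rule prefix_count) (use S AB BS in auto)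
  moreover have "card (S - A) = card S - card A" using S AB BS by (meson card_Diff_subset finite_subset order_trans)
  moreover have "card B \<le> card S" using S BS card_mono by blast
  moreover have "card S - card A - (card B - card A) = card S - card B" using cAB by simp
  moreover have "card {xs \<in> permutations_of_set S. set (take (card A) xs) = A \<and>
          (\<lambda>zs. set (take (card (B - A)) zs) = B - A) (drop (card A) xs)}
     = fact (card A) * card {zs \<in> permutations_of_set (S - A). set (take (card (B - A)) zs) = B - A}"
    by (rule split_count[OF S order_trans[OF AB BS]])
  ultimately show ?thesis
    unfolding eq using cBA by (simp add: mult.assoc)
qed


lemma card_set_take_perm:
  assumes "xs \<in> permutations_of_set S" "k \<le> card S"
  shows "card (set (take k xs)) = k"
proof -
  have "distinct xs" "length xs = card S" using assms permutations_of_setD length_finite_permutations_of_set by blast+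
  thus ?thesis using assms by (simp add: distinct_card)
qed

lemma count_prefixes_one:
  assumes xs: "xs \<in> permutations_of_set S"
  shows "card {k. k \<le> card S \<and> set (take k xs) \<in> D} = card {A \<in> D. A \<subseteq> S \<and> set (take (card A) xs) = A}"
proof -
  have "{A \<in> D. A \<subseteq> S \<and> set (take (card A) xs) = A} = (\<lambda>k. set (take k xs)) ` {k. k \<le> card S \<and> set (take k xs) \<in> D}"
  proof
    show "{A \<in> D. A \<subseteq> S \<and> set (take (card A) xs) = A} \<subseteq> (\<lambda>k. set (take k xs)) ` {k. k \<le> card S \<and> set (take k xs) \<in> D}"
    proof
      fix A assume A: "A \<in> {A \<in> D. A \<subseteq> S \<and> set (take (card A) xs) = A}"
      have "card A \<le> card S"
      proof -
        have "set xs = S" using xs permutations_of_setD by blast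
        hence "finite S" by auto
        thus ?thesis using A card_mono by blast
      qed
      thus "A \<in> (\<lambda>k. set (take k xs)) ` {k. k \<le> card S \<and> set (take k xs) \<in> D}"
        using A by (intro rev_image_eqI[of "card A"]) auto
    qed
  next
    show "(\<lambda>k. set (take k xs)) ` {k. k \<le> card S \<and> set (take k xs) \<in> D} \<subseteq> {A \<in> D. A \<subseteq> S \<and> set (take (card A) xs) = A}"
    proof
      fix A assume "A \<in> (\<lambda>k. set (take k xs)) ` {k. k \<le> card S \<and> set (take k xs) \<in> D}"
      then obtain k where k: "k \<le> card S" "set (take k xs) \<in> D" "A = set (take k xs)" by auto
      have "card A = k" using card_set_take_perm[OF xs k(1)] k by simp
      moreover have "A \<subseteq> S" using k xs permutations_of_setD(1) by (metis set_take_subset)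
      ultimately show "A \<in> {A \<in> D. A \<subseteq> S \<and> set (take (card A) xs) = A}" using k by auto
    qed
  qed
  moreover have "inj_on (\<lambda>k. set (take k xs)) {k. k \<le> card S \<and> set (take k xs) \<in> D}"
    by (rule inj_onI) (metis (no_types, lifting) card_set_take_perm[OF xs] mem_Collect_eq)
  ultimately show ?thesis by (simp add: card_image)
qed

lemma sum_prefix_count:
  assumes S: "finite S" and G: "G \<subseteq> Pow S"
  shows "(\<Sum>xs\<in>permutations_of_set S. card {k. k \<le> card S \<and> set (take k xs) \<in> G})
       = (\<Sum>A\<in>G. fact (card A) * fact (card S - card A))"
proof -
  have fG: "finite G" using G S by (meson finite_Pow_iff finite_subset)
  have "(\<Sum>xs\<in>permutations_of_set S. card {k. k \<le> card S \<and> set (take k xs) \<in> G})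
      = (\<Sum>xs\<in>permutations_of_set S. \<Sum>A\<in>G. if set (take (card A) xs) = A then 1 else 0)"
  proof (rule sum.cong[OF refl])
    fix xs assume xs: "xs \<in> permutations_of_set S"
    have "card {k. k \<le> card S \<and> set (take k xs) \<in> G} = card {A \<in> G. A \<subseteq> S \<and> set (take (card A) xs) = A}"
      by (rule count_prefixes_one[OF xs])
    also have "\<dots> = card {A \<in> G. set (take (card A) xs) = A}" using G by (metis (no_types, lifting) PowD subsetD)
    also have "\<dots> = (\<Sum>A\<in>G. if set (take (card A) xs) = A then 1 else 0)"
      using fG by (simp add: sum.If_cases Int_def)
    finally show "card {k. k \<le> card S \<and> set (take k xs) \<in> G} = (\<Sum>A\<in>G. if set (take (card A) xs) = A then 1 else 0)" .
  qed
  also have "\<dots> = (\<Sum>A\<in>G. \<Sum>xs\<in>permutations_of_set S. if set (take (card A) xs) = A then 1 else 0)"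
    by (rule sum.swap)
  also have "\<dots> = (\<Sum>A\<in>G. card {xs \<in> permutations_of_set S. set (take (card A) xs) = A})"
    by (simp add: sum.If_cases Int_def)
  also have "\<dots> = (\<Sum>A\<in>G. fact (card A) * fact (card S - card A))"
    using G S by (intro sum.cong refl prefix_count) auto
  finally show ?thesis .
qed

lemma sum_pair_count:
  assumes S: "finite S" and R: "R \<subseteq> {(A,B). A \<subseteq> B \<and> B \<subseteq> S}"
  shows "(\<Sum>xs\<in>permutations_of_set S. card {(k,k'). k \<le> card S \<and> k' \<le> card S \<and> (set (take k xs), set (take k' xs)) \<in> R})
       = (\<Sum>(A,B)\<in>R. fact (card A) * fact (card B - card A) * fact (card S - card B))"
proof -
  have fR: "finite R"
  proof -
    have "R \<subseteq> Pow S \<times> Pow S" using R by auto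
    thus ?thesis using S by (meson finite_Pow_iff finite_SigmaI finite_subset)
  qed
  have "(\<Sum>xs\<in>permutations_of_set S. card {(k,k'). k \<le> card S \<and> k' \<le> card S \<and> (set (take k xs), set (take k' xs)) \<in> R})
      = (\<Sum>xs\<in>permutations_of_set S. \<Sum>p\<in>R. if set (take (card (fst p)) xs) = fst p \<and> set (take (card (snd p)) xs) = snd p then 1 else 0)"
  proof (rule sum.cong[OF refl])
    fix xs assume xs: "xs \<in> permutations_of_set S"
    let ?pre = "\<lambda>k. set (take k xs)"
    let ?I = "{(k,k'). k \<le> card S \<and> k' \<le> card S \<and> (?pre k, ?pre k') \<in> R}"
    let ?J = "{p \<in> R. ?pre (card (fst p)) = fst p \<and> ?pre (card (snd p)) = snd p}"
    have "?J = (\<lambda>(k,k'). (?pre k, ?pre k')) ` ?I"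
    proof
      show "?J \<subseteq> (\<lambda>(k,k'). (?pre k, ?pre k')) ` ?I"
      proof
        fix p assume p: "p \<in> ?J"
        obtain A B where pAB: "p = (A,B)" by fastforce
        have "A \<subseteq> S" "B \<subseteq> S" using p pAB R by auto
        hence "card A \<le> card S" "card B \<le> card S" using S card_mono by blast+
        thus "p \<in> (\<lambda>(k,k'). (?pre k, ?pre k')) ` ?I" using p pAB
          by (intro rev_image_eqI[of "(card A, card B)"]) auto
      qed
    next
      show "(\<lambda>(k,k'). (?pre k, ?pre k')) ` ?I \<subseteq> ?J"
      proof
        fix p assume "p \<in> (\<lambda>(k,k'). (?pre k, ?pre k')) ` ?I"
        then obtain k k' where kk: "k \<le> card S" "k' \<le> card S" "(?pre k, ?pre k') \<in> R" "p = (?pre k, ?pre k')" by auto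
        show "p \<in> ?J" using kk card_set_take_perm[OF xs] by auto
      qed
    qed
    moreover have "inj_on (\<lambda>(k,k'). (?pre k, ?pre k')) ?I"
    proof (rule inj_onI)
      fix p q assume p: "p \<in> ?I" and q: "q \<in> ?I" and e: "(\<lambda>(k,k'). (?pre k, ?pre k')) p = (\<lambda>(k,k'). (?pre k, ?pre k')) q"
      obtain a b where ab: "p = (a,b)" by fastforce
      obtain c d where cd: "q = (c,d)" by fastforce
      have "card (?pre a) = a" "card (?pre b) = b" "card (?pre c) = c" "card (?pre d) = d"
        using p q ab cd card_set_take_perm[OF xs] by auto
      thus "p = q" using e ab cd by (metis case_prod_conv prod.inject)
    qed
    ultimately have "card ?I = card ?J" by (simp add: card_image)
    also have "\<dots> = (\<Sum>p\<in>R. if ?pre (card (fst p)) = fst p \<and> ?pre (card (snd p)) = snd p then 1 else 0)"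
      using fR by (simp add: sum.If_cases Int_def)
    finally show "card ?I = (\<Sum>p\<in>R. if ?pre (card (fst p)) = fst p \<and> ?pre (card (snd p)) = snd p then 1 else 0)" .
  qed
  also have "\<dots> = (\<Sum>p\<in>R. \<Sum>xs\<in>permutations_of_set S. if set (take (card (fst p)) xs) = fst p \<and> set (take (card (snd p)) xs) = snd p then 1 else 0)"
    by (rule sum.swap)
  also have "\<dots> = (\<Sum>p\<in>R. card {xs \<in> permutations_of_set S. set (take (card (fst p)) xs) = fst p \<and> set (take (card (snd p)) xs) = snd p})"
    by (simp add: sum.If_cases Int_def)
  also have "\<dots> = (\<Sum>(A,B)\<in>R. fact (card A) * fact (card B - card A) * fact (card S - card B))"
  proof (rule sum.cong[OF refl])
    fix p assume "p \<in> R"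
    then obtain A B where "p = (A,B)" "A \<subseteq> B" "B \<subseteq> S" using R by auto
    thus "card {xs \<in> permutations_of_set S. set (take (card (fst p)) xs) = fst p \<and> set (take (card (snd p)) xs) = snd p}
        = (case p of (A,B) \<Rightarrow> fact (card A) * fact (card B - card A) * fact (card S - card B))"
      using pair_count[OF S] by simp
  qed
  finally show ?thesis .
qed


definition up_rich :: "'x set set \<Rightarrow> nat \<Rightarrow> 'x set \<Rightarrow> bool" where
  "up_rich F K A \<longleftrightarrow> K \<le> card {B\<in>F. A \<subset> B}"
definition dn_rich :: "'x set set \<Rightarrow> nat \<Rightarrow> 'x set \<Rightarrow> bool" where
  "dn_rich F K A \<longleftrightarrow> K \<le> card {B\<in>F. B \<subset> A}"
definition Ups :: "'x set set \<Rightarrow> nat \<Rightarrow> nat \<Rightarrow> 'x set set" where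
  "Ups F K a = {B\<in>F. dn_rich F K B \<and> (a = 2 \<longrightarrow> up_rich F K B)}"
definition Dns :: "'x set set \<Rightarrow> nat \<Rightarrow> nat \<Rightarrow> 'x set set" where
  "Dns F K b = {B\<in>F. up_rich F K B \<and> (b = 2 \<longrightarrow> dn_rich F K B)}"
definition good :: "'x set set \<Rightarrow> nat \<Rightarrow> nat \<Rightarrow> nat \<Rightarrow> 'x set \<Rightarrow> bool" where
  "good F K a b X \<longleftrightarrow> (1 \<le> a \<longrightarrow> K \<le> card {B\<in>Ups F K a. X \<subset> B}) \<and>
                        (1 \<le> b \<longrightarrow> K \<le> card {B\<in>Dns F K b. B \<subset> X})"
definition badR :: "'x set set \<Rightarrow> nat \<Rightarrow> nat \<Rightarrow> nat \<Rightarrow> 'x set set \<Rightarrow> ('x set \<times> 'x set) set" where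
  "badR F K a b G = {(A,B). A \<in> G \<and> B \<in> G \<and> A \<subset> B \<and> card A + 4 \<le> card B \<and>
      (\<not> dn_rich F K B \<or> \<not> up_rich F K A \<or>
       (B \<in> Ups F K a \<and> card {C\<in>Ups F K a. A \<subset> C} < K) \<or>
       (A \<in> Dns F K b \<and> card {C\<in>Dns F K b. C \<subset> B} < K))}"

lemma chain_positions:
  fixes s :: "nat \<Rightarrow> 'x set"
  assumes H: "\<And>j. 4*b \<le> j \<Longrightarrow> j + 4*a < t \<Longrightarrow>
     \<exists>i. i + 4 < t \<and> (s i, s (i+4)) \<in> R \<and> (i = j \<or> i = j+4 \<or> i+4 = j \<or> i+8 = j)"
  shows "t \<le> 4*(a+b) + 4 * card {i. i + 4 < t \<and> (s i, s (i+4)) \<in> R}"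
proof -
  let ?I = "{i. i + 4 < t \<and> (s i, s (i+4)) \<in> R}"
  let ?J = "{j. 4*b \<le> j \<and> j + 4*a < t}"
  have fI: "finite ?I" by (rule finite_subset[of _ "{..<t}"]) auto
  have "?J \<subseteq> ?I \<union> (\<lambda>i. i+4) ` ?I \<union> (\<lambda>i. i-4) ` ?I \<union> (\<lambda>i. i+8) ` ?I"
  proof
    fix j assume "j \<in> ?J"
    then obtain i where i: "i \<in> ?I" "i = j \<or> i = j+4 \<or> i+4 = j \<or> i+8 = j" using H by blast
    from i(2) show "j \<in> ?I \<union> (\<lambda>i. i+4) ` ?I \<union> (\<lambda>i. i-4) ` ?I \<union> (\<lambda>i. i+8) ` ?I"
    proof (elim disjE)
      assume "i = j" thus ?thesis using i(1) by auto
    next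
      assume "i = j + 4" hence "j = i - 4" by simp
      thus ?thesis using i(1) by blast
    next
      assume "i + 4 = j" thus ?thesis using i(1) by blast
    next
      assume "i + 8 = j" thus ?thesis using i(1) by blast
    qed
  qed
  hence "card ?J \<le> card (?I \<union> (\<lambda>i. i+4) ` ?I \<union> (\<lambda>i. i-4) ` ?I \<union> (\<lambda>i. i+8) ` ?I)"
    using fI by (intro card_mono) auto
  also have "\<dots> \<le> card ?I + card ((\<lambda>i. i+4) ` ?I) + card ((\<lambda>i. i-4) ` ?I) + card ((\<lambda>i. i+8) ` ?I)"
    by (smt (verit, ccfv_threshold) add_le_mono card_Un_le le_trans nat_le_linear)
  also have "\<dots> \<le> 4 * card ?I"
    using card_image_le[OF fI, of "\<lambda>i. i+4"] card_image_le[OF fI, of "\<lambda>i. i-4"] card_image_le[OF fI, of "\<lambda>i. i+8"]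
    by linarith
  finally have "card ?J \<le> 4 * card ?I" .
  moreover have "?J = {4*b..<t - 4*a}" by auto
  ultimately show ?thesis by simp
qed

lemma local_bad:
  fixes s :: "nat \<Rightarrow> 'x set"
  assumes G: "G \<subseteq> F"
    and sG: "\<And>i. i < t \<Longrightarrow> s i \<in> G"
    and smono: "\<And>i i'. i < i' \<Longrightarrow> i' < t \<Longrightarrow> s i \<subset> s i' \<and> card (s i) + (i' - i) \<le> card (s i')"
    and ng: "\<And>j. j < t \<Longrightarrow> \<not> good F K a b (s j)"
    and a2: "a \<le> 2" and b2: "b \<le> 2"
    and j: "4*b \<le> j" "j + 4*a < t"
  shows "\<exists>i. i + 4 < t \<and> (s i, s (i+4)) \<in> badR F K a b G \<and> (i = j \<or> i = j+4 \<or> i+4 = j \<or> i+8 = j)"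
proof -
  have pairR: "(s i, s (i+4)) \<in> badR F K a b G" if "i + 4 < t" and
     "\<not> dn_rich F K (s (i+4)) \<or> \<not> up_rich F K (s i) \<or>
       (s (i+4) \<in> Ups F K a \<and> card {C\<in>Ups F K a. s i \<subset> C} < K) \<or>
       (s i \<in> Dns F K b \<and> card {C\<in>Dns F K b. C \<subset> s (i+4)} < K)" for i
    using that sG smono[of i "i+4"] unfolding badR_def by auto
  have jt: "j < t" using j by linarith
  have "\<not> good F K a b (s j)" using ng jt by blast
  then consider (up) "1 \<le> a" "card {B\<in>Ups F K a. s j \<subset> B} < K"
    | (dn) "1 \<le> b" "card {B\<in>Dns F K b. B \<subset> s j} < K"
    unfolding good_def by linarith
  thus ?thesis
  proof cases
    case up
    have j4: "j + 4 < t" using up j by linarith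
    show ?thesis
    proof (cases "s (j+4) \<in> Ups F K a")
      case True
      hence "(s j, s (j+4)) \<in> badR F K a b G" using pairR[OF j4] up by blast
      thus ?thesis using j4 by blast
    next
      case False
      have "s (j+4) \<in> F" using sG j4 G by blast
      hence "\<not> dn_rich F K (s (j+4)) \<or> (a = 2 \<and> \<not> up_rich F K (s (j+4)))"
        using False unfolding Ups_def by blast
      thus ?thesis
      proof
        assume "\<not> dn_rich F K (s (j+4))"
        hence "(s j, s (j+4)) \<in> badR F K a b G" using pairR[OF j4] by blast
        thus ?thesis using j4 by blast
      next
        assume h: "a = 2 \<and> \<not> up_rich F K (s (j+4))"
        hence "j + 4 + 4 < t" using j by linarith
        thus ?thesis using pairR[of "j+4"] h by (intro exI[of _ "j+4"]) auto
      qed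
    qed
  next
    case dn
    have j4: "4 \<le> j" using dn j by linarith
    define i where "i = j - 4"
    have ij: "i + 4 = j" using j4 i_def by simp
    have it: "i + 4 < t" using ij jt by simp
    show ?thesis
    proof (cases "s i \<in> Dns F K b")
      case True
      thus ?thesis using pairR[OF it] dn ij it by (intro exI[of _ i]) auto
    next
      case False
      have "s i \<in> F" using sG it G by auto
      hence "\<not> up_rich F K (s i) \<or> (b = 2 \<and> \<not> dn_rich F K (s i))"
        using False unfolding Dns_def by blast
      thus ?thesis
      proof
        assume "\<not> up_rich F K (s i)" thus ?thesis using pairR[OF it] ij it jt by (intro exI[of _ i]) auto
      next
        assume h: "b = 2 \<and> \<not> dn_rich F K (s i)"
        hence j8: "8 \<le> j" using j by linarith
        define i' where "i' = j - 8"
        have "i' + 4 = i" "i' + 8 = j" using i'_def i_def j8 by auto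
        thus ?thesis using pairR[of i'] h it by (intro exI[of _ i']) auto
      qed
    qed
  qed
qed


lemma sorted_gap:
  fixes ks :: "nat list"
  assumes "sorted_wrt (<) ks" "i' < length ks"
  shows "i \<le> i' \<Longrightarrow> ks!i + (i' - i) \<le> ks!i'"
  using assms(2)
proof (induction i')
  case 0 thus ?case by simp
next
  case (Suc m)
  show ?case
  proof (cases "i = Suc m")
    case True thus ?thesis by simp
  next
    case False
    hence "i \<le> m" using Suc.prems by simp
    hence "ks!i + (m - i) \<le> ks!m" using Suc by simp
    moreover have "ks!m < ks!(Suc m)" using assms(1) Suc.prems(2) sorted_wrt_nth_less by fastforce
    ultimately show ?thesis using \<open>i \<le> m\<close> by linarith
  qed
qed

lemma per_perm:
  assumes xs: "xs \<in> permutations_of_set S" and G: "G \<subseteq> F"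
    and ng: "\<And>X. X \<in> G \<Longrightarrow> \<not> good F K a b X"
    and a2: "a \<le> 2" and b2: "b \<le> 2"
  shows "card {k. k \<le> card S \<and> set (take k xs) \<in> G}
     \<le> 4*(a+b) + 4 * card {(k,k'). k \<le> card S \<and> k' \<le> card S \<and> (set (take k xs), set (take k' xs)) \<in> badR F K a b G}"
proof -
  let ?pre = "\<lambda>k. set (take k xs)"
  let ?K = "{k. k \<le> card S \<and> ?pre k \<in> G}"
  define ks where "ks = sorted_list_of_set ?K"
  have fK: "finite ?K" by (rule finite_subset[of _ "{..card S}"]) auto
  have st: "sorted_wrt (<) ks" unfolding ks_def by simp
  have lk: "length ks = card ?K" unfolding ks_def by simp
  have setks: "set ks = ?K" unfolding ks_def using fK by simp
  define t where "t = length ks"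
  define s where "s = (\<lambda>i. ?pre (ks!i))"
  have ksK: "ks!i \<in> ?K" if "i < t" for i using that setks t_def nth_mem by blast
  have cs: "card (s i) = ks!i" if "i < t" for i
    using ksK[OF that] card_set_take_perm[OF xs] s_def by auto
  have sG: "s i \<in> G" if "i < t" for i using ksK[OF that] s_def by auto
  have smono: "s i \<subset> s i' \<and> card (s i) + (i' - i) \<le> card (s i')" if "i < i'" "i' < t" for i i'
  proof -
    have lt: "ks!i < ks!i'" using st that t_def sorted_wrt_nth_less by blast
    have "s i \<subseteq> s i'" unfolding s_def using lt by (simp add: set_take_subset_set_take)
    moreover have "card (s i) < card (s i')" using cs that lt by simp
    ultimately have "s i \<subset> s i'" by auto
    moreover have "ks!i + (i' - i) \<le> ks!i'" using sorted_gap[OF st, of i' i] that t_def by simp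
    ultimately show ?thesis using cs that by simp
  qed
  have ng': "\<not> good F K a b (s j)" if "j < t" for j using ng sG that by blast
  have H: "\<exists>i. i + 4 < t \<and> (s i, s (i+4)) \<in> badR F K a b G \<and> (i = j \<or> i = j+4 \<or> i+4 = j \<or> i+8 = j)"
    if "4*b \<le> j" "j + 4*a < t" for j
    using local_bad[OF G sG smono ng' a2 b2 that] by blast
  have main: "t \<le> 4*(a+b) + 4 * card {i. i + 4 < t \<and> (s i, s (i+4)) \<in> badR F K a b G}"
    by (rule chain_positions[where s=s and R="badR F K a b G"]) (use H in blast)
  let ?I = "{i. i + 4 < t \<and> (s i, s (i+4)) \<in> badR F K a b G}"
  let ?P = "{(k,k'). k \<le> card S \<and> k' \<le> card S \<and> (?pre k, ?pre k') \<in> badR F K a b G}"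
  have fP: "finite ?P" by (rule finite_subset[of _ "{..card S} \<times> {..card S}"]) auto
  have "(\<lambda>i. (ks!i, ks!(i+4))) ` ?I \<subseteq> ?P"
  proof
    fix p assume "p \<in> (\<lambda>i. (ks!i, ks!(i+4))) ` ?I"
    then obtain i where i: "i + 4 < t" "(s i, s (i+4)) \<in> badR F K a b G" "p = (ks!i, ks!(i+4))" by auto
    have "ks!i \<le> card S" "ks!(i+4) \<le> card S" using ksK i(1) by auto
    thus "p \<in> ?P" using i s_def by auto
  qed
  moreover have "inj_on (\<lambda>i. (ks!i, ks!(i+4))) ?I"
  proof (rule inj_onI)
    fix i i' assume ii: "i \<in> ?I" "i' \<in> ?I" "(ks!i, ks!(i+4)) = (ks!i', ks!(i'+4))"
    have d: "distinct ks" using st strict_sorted_iff by blast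
    have "i < length ks" "i' < length ks" using ii t_def by auto
    thus "i = i'" using ii(3) nth_eq_iff_index_eq[OF d, of i i'] by simp
  qed
  ultimately have "card ?I \<le> card ?P"
  proof -
    assume s1: "(\<lambda>i. (ks!i, ks!(i+4))) ` ?I \<subseteq> ?P" and s2: "inj_on (\<lambda>i. (ks!i, ks!(i+4))) ?I"
    have "card ?I = card ((\<lambda>i. (ks!i, ks!(i+4))) ` ?I)" using card_image[OF s2] by simp
    also have "\<dots> \<le> card ?P" using card_mono[OF fP s1] .
    finally show ?thesis .
  qed
  thus ?thesis using main lk t_def by linarith
qed


lemma few_bound:
  fixes w :: "'p \<Rightarrow> nat" and c :: "'y \<Rightarrow> nat" and f :: "'p \<Rightarrow> 'y"
  assumes fR: "finite R" and fG: "finite G" and fRG: "f ` R \<subseteq> G"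
    and few: "\<And>y. card {p \<in> R. f p = y} \<le> K"
    and wc: "\<And>p. p \<in> R \<Longrightarrow> M * w p \<le> c (f p)"
  shows "M * sum w R \<le> K * sum c G"
proof -
  have "M * sum w R = M * (\<Sum>y\<in>G. sum w {p. p \<in> R \<and> f p = y})"
    using sum.group[OF fR fG fRG, of w] by simp
  also have "\<dots> = (\<Sum>y\<in>G. M * sum w {p. p \<in> R \<and> f p = y})" by (simp add: sum_distrib_left)
  also have "\<dots> \<le> (\<Sum>y\<in>G. K * c y)"
  proof (rule sum_mono)
    fix y assume "y \<in> G"
    have "M * sum w {p. p \<in> R \<and> f p = y} = (\<Sum>p\<in>{p. p \<in> R \<and> f p = y}. M * w p)" by (simp add: sum_distrib_left)
    also have "\<dots> \<le> (\<Sum>p\<in>{p. p \<in> R \<and> f p = y}. c y)" by (rule sum_mono) (use wc in auto)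
    also have "\<dots> = card {p \<in> R. f p = y} * c y" by simp
    also have "\<dots> \<le> K * c y" using few by (simp add: mult_right_mono)
    finally show "M * sum w {p. p \<in> R \<and> f p = y} \<le> K * c y" .
  qed
  also have "\<dots> = K * sum c G" by (simp add: sum_distrib_left)
  finally show ?thesis .
qed

lemma binom_core:
  fixes g r m :: nat
  assumes "4 \<le> g" "4 \<le> r" "m \<le> r"
  shows "(m choose 4) * (fact g * fact r) \<le> fact (g + r)"
proof -
  have e: "fact (g + r) = fact g * fact r * ((g + r) choose g)"
    using binomial_fact_lemma[of g "g+r"] by simp
  have "(m choose 4) \<le> ((g+r) choose 4)" using assms binomial_right_mono by simp
  also have "\<dots> \<le> ((g+r) choose g)"
  proof (cases "g \<le> r")
    case True
    thus ?thesis using assms binomial_mono[of 4 g "g+r"] by simp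
  next
    case False
    have "((g+r) choose 4) \<le> ((g+r) choose r)" using assms False binomial_mono[of 4 r "g+r"] by simp
    also have "\<dots> = ((g+r) choose g)" using binomial_symmetric[of g "g+r"] by simp
    finally show ?thesis .
  qed
  finally show ?thesis using e by (simp add: mult_right_mono)
qed


lemma sum_union_le_nat:
  fixes f :: "'a \<Rightarrow> nat"
  assumes "finite A" "finite B"
  shows "sum f (A \<union> B) \<le> sum f A + sum f B"
  using sum_Un_nat[OF assms, of f] by linarith

lemma card_fiber_snd:
  assumes fQ: "finite Q" and h: "\<And>p. p \<in> R' \<Longrightarrow> snd p = y \<Longrightarrow> fst p \<in> Q"
  shows "card {p \<in> R'. snd p = y} \<le> card Q"
proof -
  have i: "inj_on fst {p \<in> R'. snd p = y}" by (rule inj_onI) (auto simp: prod_eq_iff)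
  have s: "fst ` {p \<in> R'. snd p = y} \<subseteq> Q" using h by auto
  have "card {p \<in> R'. snd p = y} = card (fst ` {p \<in> R'. snd p = y})" using card_image[OF i] by simp
  also have "\<dots> \<le> card Q" using card_mono[OF fQ s] .
  finally show ?thesis .
qed

lemma card_fiber_fst:
  assumes fQ: "finite Q" and h: "\<And>p. p \<in> R' \<Longrightarrow> fst p = y \<Longrightarrow> snd p \<in> Q"
  shows "card {p \<in> R'. fst p = y} \<le> card Q"
proof -
  have i: "inj_on snd {p \<in> R'. fst p = y}" by (rule inj_onI) (auto simp: prod_eq_iff)
  have s: "snd ` {p \<in> R'. fst p = y} \<subseteq> Q" using h by auto
  have "card {p \<in> R'. fst p = y} = card (snd ` {p \<in> R'. fst p = y})" using card_image[OF i] by simp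
  also have "\<dots> \<le> card Q" using card_mono[OF fQ s] .
  finally show ?thesis .
qed

definition wgt :: "nat \<Rightarrow> 'x set \<times> 'x set \<Rightarrow> nat" where
  "wgt n p = fact (card (fst p)) * fact (card (snd p) - card (fst p)) * fact (n - card (snd p))"

definition lym :: "nat \<Rightarrow> 'x set \<Rightarrow> nat" where
  "lym n A = fact (card A) * fact (n - card A)"

lemma badR_bound:
  fixes F G :: "'x set set"
  assumes fF: "finite F" and GF: "G \<subseteq> F" and n16: "16 \<le> n"
    and win: "\<And>A. A \<in> G \<Longrightarrow> n \<le> 4 * card A \<and> 4 * card A \<le> 3 * n"
  shows "((n div 4) choose 4) * sum (wgt n) (badR F K a b G) \<le> 4 * K * sum (lym n) G"
proof -
  let ?M = "(n div 4) choose 4"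
  let ?R = "badR F K a b G"
  have fG: "finite G" using fF GF finite_subset by blast
  have fR: "finite ?R"
    by (rule finite_subset[of _ "G \<times> G"]) (use fG in \<open>auto simp: badR_def\<close>)
  have Rprops: "fst p \<in> G \<and> snd p \<in> G \<and> fst p \<subset> snd p \<and> card (fst p) + 4 \<le> card (snd p)" if "p \<in> ?R" for p
    using that unfolding badR_def by auto
  have wA: "?M * wgt n p \<le> lym n (fst p)" if "p \<in> ?R" for p
  proof -
    obtain A B where p: "p = (A,B)" by fastforce
    have h: "A \<in> G" "B \<in> G" "card A + 4 \<le> card B" using Rprops[OF that] p by auto
    have wB: "4 * card B \<le> 3 * n" using win h by blast
    have "?M * (fact (card B - card A) * fact (n - card B)) \<le> fact ((card B - card A) + (n - card B))"
      by (rule binom_core) (use h wB n16 in auto)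
    moreover have "(card B - card A) + (n - card B) = n - card A" using h wB by linarith
    ultimately have "?M * (fact (card B - card A) * fact (n - card B)) \<le> fact (n - card A)" by simp
    hence "fact (card A) * (?M * (fact (card B - card A) * fact (n - card B))) \<le> fact (card A) * fact (n - card A)"
      by (simp add: mult_left_mono)
    thus ?thesis unfolding wgt_def lym_def p by (simp add: algebra_simps)
  qed
  have wB: "?M * wgt n p \<le> lym n (snd p)" if "p \<in> ?R" for p
  proof -
    obtain A B where p: "p = (A,B)" by fastforce
    have h: "A \<in> G" "B \<in> G" "card A + 4 \<le> card B" using Rprops[OF that] p by auto
    have wA': "n \<le> 4 * card A" using win h by blast
    have "?M * (fact (card B - card A) * fact (card A)) \<le> fact ((card B - card A) + card A)"
      by (rule binom_core) (use h wA' n16 in auto)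
    moreover have "(card B - card A) + card A = card B" using h by linarith
    ultimately have "?M * (fact (card B - card A) * fact (card A)) \<le> fact (card B)" by simp
    hence "fact (n - card B) * (?M * (fact (card B - card A) * fact (card A))) \<le> fact (n - card B) * fact (card B)"
      by (simp add: mult_left_mono)
    thus ?thesis unfolding wgt_def lym_def p by (simp add: algebra_simps)
  qed
  define R1 where "R1 = {p \<in> ?R. \<not> dn_rich F K (snd p)}"
  define R2 where "R2 = {p \<in> ?R. \<not> up_rich F K (fst p)}"
  define R3 where "R3 = {p \<in> ?R. snd p \<in> Ups F K a \<and> card {C\<in>Ups F K a. fst p \<subset> C} < K}"
  define R4 where "R4 = {p \<in> ?R. fst p \<in> Dns F K b \<and> card {C\<in>Dns F K b. C \<subset> snd p} < K}"
  have Req: "?R = R1 \<union> R2 \<union> R3 \<union> R4"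
    unfolding R1_def R2_def R3_def R4_def by (auto simp: badR_def)
  have f1: "finite R1" "finite R2" "finite R3" "finite R4" using fR unfolding R1_def R2_def R3_def R4_def by auto
  have s1: "sum (wgt n) ?R \<le> sum (wgt n) R1 + sum (wgt n) R2 + sum (wgt n) R3 + sum (wgt n) R4"
    unfolding Req using f1 sum_union_le_nat
    by (smt (verit, ccfv_threshold) add_mono_thms_linordered_semiring(3) finite_UnI le_trans)
  have fsub: "finite {C \<in> F. P C}" for P using fF by auto
  have b1: "?M * sum (wgt n) R1 \<le> K * sum (lym n) G"
  proof (rule few_bound[where f=snd])
    show "finite R1" by (rule f1)
    show "finite G" by (rule fG)
    show "snd ` R1 \<subseteq> G" using Rprops unfolding R1_def by auto
    show "?M * wgt n p \<le> lym n (snd p)" if "p \<in> R1" for p using wB that unfolding R1_def by auto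
    fix y
    show "card {p \<in> R1. snd p = y} \<le> K"
    proof (cases "\<exists>p\<in>R1. snd p = y")
      case False hence "{p \<in> R1. snd p = y} = {}" by auto
      thus ?thesis by (metis card.empty le0)
    next
      case True
      hence "\<not> dn_rich F K y" unfolding R1_def by auto
      hence "card {C \<in> F. C \<subset> y} < K" unfolding dn_rich_def by simp
      moreover have "card {p \<in> R1. snd p = y} \<le> card {C \<in> F. C \<subset> y}"
        proof (rule card_fiber_snd[OF fsub])
          fix p assume p: "p \<in> R1" "snd p = y"
          hence pR: "p \<in> badR F K a b G" "p \<in> R1" unfolding R1_def by auto
          hence "fst p \<in> G" "fst p \<subset> snd p" using Rprops[OF pR(1)] by auto
          thus "fst p \<in> {C \<in> F. C \<subset> y}" using p pR GF unfolding R1_def by auto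
        qed
      ultimately show ?thesis by simp
    qed
  qed
  have b2: "?M * sum (wgt n) R2 \<le> K * sum (lym n) G"
  proof (rule few_bound[where f=fst])
    show "finite R2" by (rule f1)
    show "finite G" by (rule fG)
    show "fst ` R2 \<subseteq> G" using Rprops unfolding R2_def by auto
    show "?M * wgt n p \<le> lym n (fst p)" if "p \<in> R2" for p using wA that unfolding R2_def by auto
    fix y
    show "card {p \<in> R2. fst p = y} \<le> K"
    proof (cases "\<exists>p\<in>R2. fst p = y")
      case False hence "{p \<in> R2. fst p = y} = {}" by auto
      thus ?thesis by (metis card.empty le0)
    next
      case True
      hence "\<not> up_rich F K y" unfolding R2_def by auto
      hence "card {C \<in> F. y \<subset> C} < K" unfolding up_rich_def by simp
      moreover have "card {p \<in> R2. fst p = y} \<le> card {C \<in> F. y \<subset> C}"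
        proof (rule card_fiber_fst[OF fsub])
          fix p assume p: "p \<in> R2" "fst p = y"
          hence pR: "p \<in> badR F K a b G" "p \<in> R2" unfolding R2_def by auto
          hence "snd p \<in> G" "fst p \<subset> snd p" using Rprops[OF pR(1)] by auto
          thus "snd p \<in> {C \<in> F. y \<subset> C}" using p pR GF unfolding R2_def by auto
        qed
      ultimately show ?thesis by simp
    qed
  qed
  have fU: "finite {C \<in> Ups F K a. P C}" for P using fF unfolding Ups_def by auto
  have fD: "finite {C \<in> Dns F K b. P C}" for P using fF unfolding Dns_def by auto
  have b3: "?M * sum (wgt n) R3 \<le> K * sum (lym n) G"
  proof (rule few_bound[where f=fst])
    show "finite R3" by (rule f1)
    show "finite G" by (rule fG)
    show "fst ` R3 \<subseteq> G" using Rprops unfolding R3_def by auto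
    show "?M * wgt n p \<le> lym n (fst p)" if "p \<in> R3" for p using wA that unfolding R3_def by auto
    fix y
    show "card {p \<in> R3. fst p = y} \<le> K"
    proof (cases "\<exists>p\<in>R3. fst p = y")
      case False hence "{p \<in> R3. fst p = y} = {}" by auto
      thus ?thesis by (metis card.empty le0)
    next
      case True
      hence "card {C\<in>Ups F K a. y \<subset> C} < K" unfolding R3_def by auto
      moreover have "card {p \<in> R3. fst p = y} \<le> card {C\<in>Ups F K a. y \<subset> C}"
        proof (rule card_fiber_fst[OF fU])
          fix p assume p: "p \<in> R3" "fst p = y"
          hence pR: "p \<in> badR F K a b G" "p \<in> R3" unfolding R3_def by auto
          hence "snd p \<in> G" "fst p \<subset> snd p" using Rprops[OF pR(1)] by auto
          thus "snd p \<in> {C \<in> Ups F K a. y \<subset> C}" using p pR GF unfolding R3_def by auto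
        qed
      ultimately show ?thesis by simp
    qed
  qed
  have b4: "?M * sum (wgt n) R4 \<le> K * sum (lym n) G"
  proof (rule few_bound[where f=snd])
    show "finite R4" by (rule f1)
    show "finite G" by (rule fG)
    show "snd ` R4 \<subseteq> G" using Rprops unfolding R4_def by auto
    show "?M * wgt n p \<le> lym n (snd p)" if "p \<in> R4" for p using wB that unfolding R4_def by auto
    fix y
    show "card {p \<in> R4. snd p = y} \<le> K"
    proof (cases "\<exists>p\<in>R4. snd p = y")
      case False hence "{p \<in> R4. snd p = y} = {}" by auto
      thus ?thesis by (metis card.empty le0)
    next
      case True
      hence "card {C\<in>Dns F K b. C \<subset> y} < K" unfolding R4_def by auto
      moreover have "card {p \<in> R4. snd p = y} \<le> card {C\<in>Dns F K b. C \<subset> y}"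
        proof (rule card_fiber_snd[OF fD])
          fix p assume p: "p \<in> R4" "snd p = y"
          hence pR: "p \<in> badR F K a b G" "p \<in> R4" unfolding R4_def by auto
          hence "fst p \<in> G" "fst p \<subset> snd p" using Rprops[OF pR(1)] by auto
          thus "fst p \<in> {C \<in> Dns F K b. C \<subset> y}" using p pR GF unfolding R4_def by auto
        qed
      ultimately show ?thesis by simp
    qed
  qed
  have "?M * sum (wgt n) ?R \<le> ?M * (sum (wgt n) R1 + sum (wgt n) R2 + sum (wgt n) R3 + sum (wgt n) R4)"
    using s1 by (simp add: mult_left_mono)
  also have "\<dots> = ?M * sum (wgt n) R1 + ?M * sum (wgt n) R2 + ?M * sum (wgt n) R3 + ?M * sum (wgt n) R4"
    by (simp add: algebra_simps)
  also have "\<dots> \<le> 4 * K * sum (lym n) G" using b1 b2 b3 b4 by linarith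
  finally show ?thesis .
qed


lemma hasse_adj_sym: "(A,B) \<in> hasse_adj P \<Longrightarrow> (B,A) \<in> hasse_adj P"
  by (auto simp: hasse_adj_def)

lemma hasse_adj_mem: "(A,B) \<in> hasse_adj P \<Longrightarrow> A \<in> P \<and> B \<in> P \<and> A \<noteq> B \<and> (A \<subset> B \<or> B \<subset> A)"
  by (auto simp: hasse_adj_def hasse_edge_def)

lemma hdist_le_of: "(x,y) \<in> hasse_adj P ^^ k \<Longrightarrow> hdist P x y \<le> k"
  unfolding hdist_def by (rule Least_le)

lemma hdist_path:
  assumes "hdist_le P x y 2"
  shows "hdist P x y \<le> 2 \<and> (x,y) \<in> hasse_adj P ^^ hdist P x y"
proof -
  obtain j where j: "j \<le> 2" "(x,y) \<in> hasse_adj P ^^ j" using assms unfolding hdist_le_def by blast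
  have "(x,y) \<in> hasse_adj P ^^ hdist P x y" unfolding hdist_def by (rule LeastI[of _ j]) (rule j(2))
  moreover have "hdist P x y \<le> j" using j(2) by (rule hdist_le_of)
  ultimately show ?thesis using j by simp
qed

lemma hdist_self: "hdist P x x = 0"
  using hdist_le_of[where x=x and y=x and P=P and k=0] by simp

lemma hdist_0_iff:
  assumes "hdist_le P x y 2"
  shows "hdist P x y = 0 \<longleftrightarrow> y = x"
  using hdist_path[OF assms] hdist_self by auto

lemma hdist_1:
  assumes "hdist_le P x y 2" "hdist P x y = 1"
  shows "(x,y) \<in> hasse_adj P"
  using hdist_path[OF assms(1)] assms(2) by simp

lemma hdist_adj_le1: "(x,y) \<in> hasse_adj P \<Longrightarrow> hdist P x y \<le> 1"
  using hdist_le_of[where x=x and y=y and P=P and k=1] by simp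

lemma hdist_2_parent:
  assumes "hdist_le P x y 2" "hdist P x y = 2"
  shows "\<exists>v. (x,v) \<in> hasse_adj P \<and> (v,y) \<in> hasse_adj P \<and> hdist P x v = 1"
proof -
  have "(x,y) \<in> hasse_adj P ^^ 2" using hdist_path[OF assms(1)] assms(2) by simp
  hence "(x,y) \<in> hasse_adj P ^^ Suc 1" by (simp add: numeral_2_eq_2)
  then obtain v where v: "(x,v) \<in> hasse_adj P ^^ 1" "(v,y) \<in> hasse_adj P" by (meson relpow_Suc_E)
  have xv: "(x,v) \<in> hasse_adj P" using v(1) by simp
  have "hdist P x v \<le> 1" using hdist_adj_le1[OF xv] .
  moreover have "hdist P x v \<noteq> 0"
  proof
    assume "hdist P x v = 0"
    moreover have "hdist_le P x v 2" unfolding hdist_le_def using v(1) by (intro exI[of _ 1]) simp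
    ultimately have "v = x" using hdist_0_iff by blast
    hence "(x,y) \<in> hasse_adj P" using v(2) by simp
    thus False using hdist_adj_le1 assms(2) by fastforce
  qed
  ultimately show ?thesis using xv v(2) by auto
qed

lemma hdist_adj_step:
  assumes "hdist_le P x v 2" "(v,y) \<in> hasse_adj P"
  shows "hdist P x y \<le> hdist P x v + 1"
proof -
  have "(x,v) \<in> hasse_adj P ^^ hdist P x v" using hdist_path[OF assms(1)] by simp
  hence "(x,y) \<in> hasse_adj P ^^ Suc (hdist P x v)" using assms(2) by auto
  thus ?thesis using hdist_le_of by fastforce
qed

lemma unique_parent:
  assumes fP: "finite P" and tree: "tree_poset P" and xP: "x \<in> P"
    and rad: "\<forall>y\<in>P. hdist_le P x y 2"
    and uP: "u \<in> P" and u2: "hdist P x u = 2"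
    and w: "(w,u) \<in> hasse_adj P" "hdist P x w = 1"
    and w': "(w',u) \<in> hasse_adj P" "hdist P x w' = 1"
  shows "w = w'"
proof -
  let ?adj = "hasse_adj P"
  define par where "par y = (SOME v. (v,y) \<in> ?adj \<and> hdist P x v + 1 = hdist P x y)" for y
  have par_ok: "(par y, y) \<in> ?adj \<and> hdist P x (par y) + 1 = hdist P x y" if "y \<in> P" "y \<noteq> x" for y
  proof -
    have yl: "hdist_le P x y 2" using rad that by blast
    have "hdist P x y \<noteq> 0" using hdist_0_iff[OF yl] that by simp
    moreover have "hdist P x y \<le> 2" using hdist_path[OF yl] by simp
    ultimately consider "hdist P x y = 1" | "hdist P x y = 2" by linarith
    hence "\<exists>v. (v,y) \<in> ?adj \<and> hdist P x v + 1 = hdist P x y"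
    proof cases
      case 1
      thus ?thesis using hdist_1[OF yl] hdist_self[of P x] by (intro exI[of _ x]) simp
    next
      case 2
      then obtain v where "(x,v) \<in> ?adj" "(v,y) \<in> ?adj" "hdist P x v = 1" using hdist_2_parent[OF yl] by blast
      thus ?thesis using 2 by (intro exI[of _ v]) simp
    qed
    thus ?thesis unfolding par_def by (rule someI_ex)
  qed
  define e where "e y = {y, par y}" for y
  have inj: "inj_on e (P - {x})"
  proof (rule inj_onI)
    fix y y' assume y: "y \<in> P - {x}" and y': "y' \<in> P - {x}" and eq: "e y = e y'"
    have py: "hdist P x (par y) + 1 = hdist P x y" and py': "hdist P x (par y') + 1 = hdist P x y'"
      using par_ok y y' by auto
    from eq have "(y = y' \<and> par y = par y') \<or> (y = par y' \<and> par y = y')"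
      unfolding e_def doubleton_eq_iff .
    thus "y = y'" using py py' by auto
  qed
  have sub: "e ` (P - {x}) \<subseteq> hasse_uedges P"
  proof
    fix E assume "E \<in> e ` (P - {x})"
    then obtain y where y: "y \<in> P" "y \<noteq> x" "E = {y, par y}" unfolding e_def by auto
    have "(par y, y) \<in> ?adj" using par_ok y by blast
    hence "hasse_edge P (par y) y \<or> hasse_edge P y (par y)" unfolding hasse_adj_def by simp
    hence "\<exists>A B. E = {A, B} \<and> hasse_edge P A B" using y(3) by (metis insert_commute)
    thus "E \<in> hasse_uedges P" unfolding hasse_uedges_def by simp
  qed
  have fU: "finite (hasse_uedges P)"
  proof -
    have "hasse_uedges P \<subseteq> Pow P" unfolding hasse_uedges_def hasse_edge_def by auto
    thus ?thesis using fP finite_subset by blast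
  qed
  have "card (e ` (P - {x})) = card P - 1" using card_image[OF inj] xP fP by simp
  also have "\<dots> = card (hasse_uedges P)" using tree unfolding tree_poset_def by linarith
  finally have eqU: "e ` (P - {x}) = hasse_uedges P" using card_subset_eq[OF fU sub] by simp
  have claim: "v = par u" if v: "(v,u) \<in> ?adj" "hdist P x v = 1" for v
  proof -
    have "hasse_edge P v u \<or> hasse_edge P u v" using v unfolding hasse_adj_def by simp
    hence "\<exists>A B. {u, v} = {A, B} \<and> hasse_edge P A B" by (metis insert_commute)
    hence "{u, v} \<in> hasse_uedges P" unfolding hasse_uedges_def by simp
    then obtain y where y: "y \<in> P - {x}" "{u, v} = {y, par y}" using eqU unfolding e_def by blast
    have py: "hdist P x (par y) + 1 = hdist P x y" using par_ok y(1) by blast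
    from y(2) have "(u = y \<and> v = par y) \<or> (u = par y \<and> v = y)" unfolding doubleton_eq_iff .
    thus ?thesis using py u2 v(2) by auto
  qed
  show ?thesis using claim[OF w] claim[OF w'] by simp
qed


definition aP :: "'a set set \<Rightarrow> 'a set \<Rightarrow> nat" where
  "aP P x = (if \<exists>u\<in>P. \<exists>w\<in>P. x \<subset> u \<and> u \<subset> w then 2 else if \<exists>u\<in>P. x \<subset> u then 1 else 0)"
definition bP :: "'a set set \<Rightarrow> 'a set \<Rightarrow> nat" where
  "bP P x = (if \<exists>u\<in>P. \<exists>w\<in>P. w \<subset> u \<and> u \<subset> x then 2 else if \<exists>u\<in>P. u \<subset> x then 1 else 0)"

lemma sdr:
  assumes "finite I"
  shows "(\<forall>i\<in>I. finite (C i) \<and> card I \<le> card (C i)) \<Longrightarrow> \<exists>f. inj_on f I \<and> (\<forall>i\<in>I. f i \<in> C i)"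
  using assms
proof (induction I rule: finite_induct)
  case empty thus ?case by auto
next
  case (insert j I)
  have cI: "card (insert j I) = card I + 1" using insert by simp
  have "\<forall>i\<in>I. finite (C i) \<and> card I \<le> card (C i)" using insert.prems cI by auto
  then obtain f where f: "inj_on f I" "\<forall>i\<in>I. f i \<in> C i" using insert.IH by blast
  have "card (f ` I) < card (C j)" using insert.prems cI card_image_le[OF insert.hyps(1), of f] by auto
  have "\<not> C j \<subseteq> f ` I"
  proof
    assume "C j \<subseteq> f ` I"
    hence "card (C j) \<le> card (f ` I)" using card_mono insert.hyps(1) by blast
    thus False using \<open>card (f ` I) < card (C j)\<close> by simp
  qed
  then obtain c where c: "c \<in> C j" "c \<notin> f ` I" by blast
  have "inj_on (f(j := c)) (insert j I)"
    using f(1) c(2) insert.hyps(2) by (auto simp: inj_on_def)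
  moreover have "\<forall>i\<in>insert j I. (f(j := c)) i \<in> C i" using f(2) c(1) insert.hyps(2) by auto
  ultimately show ?case by blast
qed

lemma adj_cases: "(A,B) \<in> hasse_adj P \<Longrightarrow> A \<subset> B \<or> B \<subset> A"
  using hasse_adj_mem by blast

lemma embed:
  fixes P :: "'a set set" and F :: "'b set set"
  assumes fP: "finite P" and tree: "tree_poset P" and xP: "x \<in> P"
    and rad: "\<forall>y\<in>P. hdist_le P x y 2" and d1: "1 \<le> d"
    and fF: "finite F" and XF: "X \<in> F" and KK: "K = card (blowup_elems P x d)"
    and gd: "good F K (aP P x) (bP P x) X"
  shows "contains_blowup F P x d"
proof -
  let ?a = "aP P x" and ?b = "bP P x"
  let ?BE = "blowup_elems P x d"
  let ?hd = "hdist P x"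
  let ?adj = "hasse_adj P"
  define L1 where "L1 = {p \<in> ?BE. ?hd (fst p) = 1}"
  define L2 where "L2 = {p \<in> ?BE. ?hd (fst p) = 2}"
  have BEmem: "p \<in> ?BE \<longleftrightarrow> fst p \<in> P \<and> snd p < d ^ ?hd (fst p)" for p
    unfolding blowup_elems_def by (cases p) auto
  have hd2: "?hd u \<le> 2" if "u \<in> P" for u using hdist_path rad that by blast
  have L0: "p = (x,0)" if "p \<in> ?BE" "p \<notin> L1" "p \<notin> L2" for p
  proof -
    have "fst p \<in> P" using that BEmem by blast
    hence "?hd (fst p) = 0" using that hd2 unfolding L1_def L2_def by fastforce
    hence "fst p = x" "snd p < 1" using hdist_0_iff rad BEmem that \<open>fst p \<in> P\<close> by auto
    thus ?thesis by (cases p) auto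
  qed
  have x0: "(x,0) \<in> ?BE" using xP hdist_self[of P x] BEmem by simp
  have x0n: "(x,0) \<notin> L1" "(x,0) \<notin> L2" unfolding L1_def L2_def using hdist_self[of P x] by auto
  have fBE: "finite ?BE"
  proof (rule finite_subset[of _ "P \<times> {..<d^2}"])
    show "?BE \<subseteq> P \<times> {..<d^2}"
    proof
      fix p assume p: "p \<in> ?BE"
      hence "fst p \<in> P" "snd p < d ^ ?hd (fst p)" using BEmem by auto
      moreover have "d ^ ?hd (fst p) \<le> d ^ 2" using d1 hd2[OF calculation(1)] by (intro power_increasing) auto
      ultimately show "p \<in> P \<times> {..<d^2}" by (cases p) auto
    qed
    show "finite (P \<times> {..<d^2})" using fP by simp
  qed
  have fL: "finite L1" "finite L2" using fBE unfolding L1_def L2_def by auto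
  have cardK: "card L1 + card L2 + 1 \<le> K"
  proof -
    have "insert (x,0) (L1 \<union> L2) \<subseteq> ?BE" using x0 unfolding L1_def L2_def by auto
    hence "card (insert (x,0) (L1 \<union> L2)) \<le> K" using KK card_mono[OF fBE] by simp
    moreover have "L1 \<inter> L2 = {}" unfolding L1_def L2_def by auto
    ultimately show ?thesis using fL x0n card_Un_disjoint[OF fL] by simp
  qed
  define C1 :: "'a set \<times> nat \<Rightarrow> 'b set set" where "C1 p = (if x \<subset> fst p then {B \<in> Ups F K ?a. X \<subset> B} else {B \<in> Dns F K ?b. B \<subset> X})" for p
  have L1adj: "(x, fst p) \<in> ?adj" "fst p \<in> P" if "p \<in> L1" for p
    using that hdist_1 rad BEmem unfolding L1_def by auto
  have C1card: "finite (C1 p) \<and> card L1 \<le> card (C1 p)" if "p \<in> L1" for p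
  proof -
    have fin: "finite (C1 p)" using fF unfolding C1_def Ups_def Dns_def by auto
    have "K \<le> card (C1 p)"
    proof (cases "x \<subset> fst p")
      case True
      hence "1 \<le> ?a" using L1adj[OF that] unfolding aP_def by auto
      thus ?thesis using gd True unfolding good_def C1_def by auto
    next
      case False
      hence "fst p \<subset> x" using adj_cases[OF L1adj(1)[OF that]] by blast
      hence "1 \<le> ?b" using L1adj[OF that] unfolding bP_def by auto
      thus ?thesis using gd False unfolding good_def C1_def by auto
    qed
    thus ?thesis using fin cardK by simp
  qed
  obtain f1 where f1: "inj_on f1 L1" "\<And>p. p \<in> L1 \<Longrightarrow> f1 p \<in> C1 p"
    using sdr[OF fL(1), of C1] C1card by blast
  have f1X: "f1 p \<noteq> X" "f1 p \<in> F" if "p \<in> L1" for p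
    using f1(2)[OF that] unfolding C1_def Ups_def Dns_def by (auto split: if_splits)
  define par2 :: "'a set \<Rightarrow> 'a set" where "par2 u = (SOME v. (v,u) \<in> ?adj \<and> ?hd v = 1)" for u
  have par2: "(par2 (fst p), fst p) \<in> ?adj \<and> ?hd (par2 (fst p)) = 1 \<and> (x, par2 (fst p)) \<in> ?adj" if "p \<in> L2" for p
  proof -
    have "fst p \<in> P" "?hd (fst p) = 2" using that BEmem unfolding L2_def by auto
    then obtain v where v: "(x,v) \<in> ?adj" "(v, fst p) \<in> ?adj" "?hd v = 1" using hdist_2_parent rad by blast
    have "\<exists>v. (v, fst p) \<in> ?adj \<and> ?hd v = 1" using v by blast
    hence "(par2 (fst p), fst p) \<in> ?adj \<and> ?hd (par2 (fst p)) = 1" unfolding par2_def by (rule someI_ex)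
    moreover have "par2 (fst p) \<in> P" using calculation hasse_adj_mem by blast
    ultimately show ?thesis using hdist_1 rad by blast
  qed
  define pp :: "'a set \<times> nat \<Rightarrow> 'a set \<times> nat" where "pp p = (par2 (fst p), snd p div d)" for p
  have ppL1: "pp p \<in> L1" if "p \<in> L2" for p
  proof -
    have "snd p < d^2" using that BEmem unfolding L2_def by auto
    hence "snd p div d < d" using d1 by (simp add: power2_eq_square less_mult_imp_div_less)
    moreover have "par2 (fst p) \<in> P" using par2[OF that] hasse_adj_mem by blast
    ultimately show ?thesis using par2[OF that] unfolding pp_def L1_def BEmem by simp
  qed
  define C2 :: "'a set \<times> nat \<Rightarrow> 'b set set" where "C2 p = {B \<in> F. if par2 (fst p) \<subset> fst p then f1 (pp p) \<subset> B else B \<subset> f1 (pp p)} - insert X (f1 ` L1)" for p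
  have C2card: "finite (C2 p) \<and> card L2 \<le> card (C2 p)" if pL2: "p \<in> L2" for p
  proof -
    let ?v = "par2 (fst p)" and ?u = "fst p" and ?V = "f1 (pp p)"
    let ?Q = "{B \<in> F. if ?v \<subset> ?u then ?V \<subset> B else B \<subset> ?V}"
    have fQ: "finite ?Q" using fF by auto
    have VC: "?V \<in> C1 (pp p)" using f1(2) ppL1[OF pL2] by blast
    have C1pp: "C1 (pp p) = (if x \<subset> ?v then {B \<in> Ups F K ?a. X \<subset> B} else {B \<in> Dns F K ?b. B \<subset> X})"
      unfolding C1_def pp_def by simp
    have uP: "?u \<in> P" using pL2 BEmem unfolding L2_def by auto
    have vP: "?v \<in> P" using par2[OF pL2] hasse_adj_mem by blast
    have KQ: "K \<le> card ?Q"
    proof (cases "x \<subset> ?v")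
      case xv: True
      hence VU: "?V \<in> Ups F K ?a" using VC C1pp by auto
      show ?thesis
      proof (cases "?v \<subset> ?u")
        case True
        hence "\<exists>u\<in>P. \<exists>w\<in>P. x \<subset> u \<and> u \<subset> w" using xv uP vP by blast
        hence "?a = 2" unfolding aP_def by simp
        hence "up_rich F K ?V" using VU unfolding Ups_def by auto
        thus ?thesis using True unfolding up_rich_def by simp
      next
        case False
        have "dn_rich F K ?V" using VU unfolding Ups_def by auto
        thus ?thesis using False unfolding dn_rich_def by simp
      qed
    next
      case xv: False
      hence "?v \<subset> x" using adj_cases par2[OF pL2] by blast
      have VD: "?V \<in> Dns F K ?b" using VC C1pp xv by auto
      show ?thesis
      proof (cases "?v \<subset> ?u")
        case True
        have "up_rich F K ?V" using VD unfolding Dns_def by auto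
        thus ?thesis using True unfolding up_rich_def by simp
      next
        case False
        hence "?u \<subset> ?v" using adj_cases par2[OF pL2] by blast
        hence "\<exists>u\<in>P. \<exists>w\<in>P. w \<subset> u \<and> u \<subset> x" using \<open>?v \<subset> x\<close> uP vP by blast
        hence "?b = 2" unfolding bP_def by simp
        hence "dn_rich F K ?V" using VD unfolding Dns_def by auto
        thus ?thesis using False unfolding dn_rich_def by simp
      qed
    qed
    have "card (insert X (f1 ` L1)) \<le> card (f1 ` L1) + 1"
      using card_insert_le_m1 fL(1) by (simp add: card_insert_if)
    hence "card (insert X (f1 ` L1)) \<le> card L1 + 1"
      using card_image_le[OF fL(1), of f1] by linarith
    moreover have "card ?Q - card (insert X (f1 ` L1)) \<le> card (C2 p)"
      unfolding C2_def by (rule diff_card_le_card_Diff) (use fL in simp)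
    ultimately have "card L2 \<le> card (C2 p)" using KQ cardK by linarith
    moreover have "finite (C2 p)" using fQ unfolding C2_def by simp
    ultimately show ?thesis by simp
  qed
  obtain f2 where f2: "inj_on f2 L2" "\<And>p. p \<in> L2 \<Longrightarrow> f2 p \<in> C2 p"
    using sdr[OF fL(2), of C2] C2card by blast
  define \<phi> :: "'a set \<times> nat \<Rightarrow> 'b set" where "\<phi> p = (if p \<in> L1 then f1 p else if p \<in> L2 then f2 p else X)" for p
  have L12: "L1 \<inter> L2 = {}" unfolding L1_def L2_def by auto
  have f2F: "f2 p \<in> F" "f2 p \<noteq> X" "f2 p \<notin> f1 ` L1" if "p \<in> L2" for p
    using f2(2)[OF that] unfolding C2_def by auto
  have phx: "\<phi> (x,0) = X" using x0n unfolding \<phi>_def by simp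
  have ph1: "\<phi> p = f1 p" if "p \<in> L1" for p using that unfolding \<phi>_def by simp
  have ph2: "\<phi> p = f2 p" if "p \<in> L2" for p using that L12 unfolding \<phi>_def by auto
  have inj: "inj_on \<phi> ?BE"
  proof (rule inj_onI)
    fix p q assume p: "p \<in> ?BE" and q: "q \<in> ?BE" and e: "\<phi> p = \<phi> q"
    have cross: False if "p' \<in> L1" "q' \<in> L2" "\<phi> p' = \<phi> q'" for p' q'
    proof -
      have "f1 p' = f2 q'" using that ph1 ph2 by simp
      moreover have "f1 p' \<in> f1 ` L1" using that(1) by blast
      ultimately show False using f2F(3)[OF that(2)] by simp
    qed
    have c1: False if "p' \<in> L1" "\<phi> p' = X" for p' using that ph1 f1X by simp
    have c2: False if "p' \<in> L2" "\<phi> p' = X" for p' using that ph2 f2F by simp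
    consider "p \<in> L1" | "p \<in> L2" | "p = (x,0)" using L0[OF p] by blast
    thus "p = q"
    proof cases
      case 1
      consider "q \<in> L1" | "q \<in> L2" | "q = (x,0)" using L0[OF q] by blast
      thus ?thesis
      proof cases
        case 1 thus ?thesis using \<open>p \<in> L1\<close> e f1(1) ph1 by (metis inj_onD)
      next
        case 2 thus ?thesis using cross \<open>p \<in> L1\<close> e by blast
      next
        case 3 thus ?thesis using c1 \<open>p \<in> L1\<close> e phx by metis
      qed
    next
      case 2
      consider "q \<in> L1" | "q \<in> L2" | "q = (x,0)" using L0[OF q] by blast
      thus ?thesis
      proof cases
        case 1 thus ?thesis using cross \<open>p \<in> L2\<close> e by metis
      next
        case 2 thus ?thesis using \<open>p \<in> L2\<close> e f2(1) ph2 by (metis inj_onD)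
      next
        case 3 thus ?thesis using c2 \<open>p \<in> L2\<close> e phx by metis
      qed
    next
      case 3
      consider "q \<in> L1" | "q \<in> L2" | "q = (x,0)" using L0[OF q] by blast
      thus ?thesis
      proof cases
        case 1 thus ?thesis using c1 3 e phx by metis
      next
        case 2 thus ?thesis using c2 3 e phx by metis
      next
        case 3 thus ?thesis using \<open>p = (x,0)\<close> by simp
      qed
    qed
  qed
  have img: "\<phi> ` ?BE \<subseteq> F" using f1X f2F XF unfolding \<phi>_def by auto
  have par_eq: "par2 (fst q) = fst r" if q2: "q \<in> L2" and r1: "r \<in> L1" and adj: "(fst r, fst q) \<in> ?adj" for q r
  proof -
    have "fst q \<in> P" "?hd (fst q) = 2" using q2 BEmem unfolding L2_def by auto
    moreover have "?hd (fst r) = 1" using r1 unfolding L1_def by auto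
    ultimately show ?thesis
      using unique_parent[OF fP tree xP rad, of "fst q" "par2 (fst q)" "fst r"] par2[OF q2] adj by blast
  qed
  have edge: "\<phi> q \<subseteq> \<phi> r" if "blowup_edge P x d q r" for q r
  proof -
    have qr: "q \<in> ?BE" "r \<in> ?BE" "hasse_edge P (fst q) (fst r)"
      and dd: "(?hd (fst q) = ?hd (fst r) + 1 \<and> snd q div d = snd r) \<or>
               (?hd (fst r) = ?hd (fst q) + 1 \<and> snd r div d = snd q)"
      using that unfolding blowup_edge_def by auto
    have sub: "fst q \<subset> fst r" using qr(3) unfolding hasse_edge_def by auto
    have adjqr: "(fst q, fst r) \<in> ?adj" "(fst r, fst q) \<in> ?adj" using qr(3) unfolding hasse_adj_def by auto
    have qP: "fst q \<in> P" and rP: "fst r \<in> P" using qr BEmem by auto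
    from dd show ?thesis
    proof
      assume h: "?hd (fst q) = ?hd (fst r) + 1 \<and> snd q div d = snd r"
      consider "r \<in> L1" | "r \<in> L2" | "r = (x,0)" "r \<notin> L1" "r \<notin> L2" using L0[OF qr(2)] by blast
      thus ?thesis
      proof cases
        case 3
        hence q1: "q \<in> L1" using h qr hdist_self[of P x] unfolding L1_def by simp
        have "\<not> x \<subset> fst q" using sub 3 by auto
        hence "f1 q \<subset> X" using f1(2)[OF q1] unfolding C1_def by auto
        thus ?thesis using ph1[OF q1] 3 phx by auto
      next
        case 1
        hence q2: "q \<in> L2" using h qr unfolding L1_def L2_def by simp
        have pe: "par2 (fst q) = fst r" using par_eq[OF q2 1 adjqr(2)] .
        have "pp q = r" unfolding pp_def using pe h by (cases r) auto
        moreover have "\<not> par2 (fst q) \<subset> fst q" using pe sub by auto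
        ultimately have "f2 q \<subset> f1 r" using f2(2)[OF q2] unfolding C2_def by auto
        thus ?thesis using ph1[OF 1] ph2[OF q2] by auto
      next
        case 2
        hence "?hd (fst q) = 3" using h unfolding L2_def by simp
        thus ?thesis using hd2[OF qP] by simp
      qed
    next
      assume h: "?hd (fst r) = ?hd (fst q) + 1 \<and> snd r div d = snd q"
      consider "q \<in> L1" | "q \<in> L2" | "q = (x,0)" "q \<notin> L1" "q \<notin> L2" using L0[OF qr(1)] by blast
      thus ?thesis
      proof cases
        case 3
        hence r1: "r \<in> L1" using h qr hdist_self[of P x] unfolding L1_def by simp
        have "x \<subset> fst r" using sub 3 by auto
        hence "X \<subset> f1 r" using f1(2)[OF r1] unfolding C1_def by auto
        thus ?thesis using ph1[OF r1] 3 phx by auto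
      next
        case 1
        hence r2: "r \<in> L2" using h qr unfolding L1_def L2_def by simp
        have pe: "par2 (fst r) = fst q" using par_eq[OF r2 1 adjqr(1)] .
        have "pp r = q" unfolding pp_def using pe h by (cases q) auto
        moreover have "par2 (fst r) \<subset> fst r" using pe sub by auto
        ultimately have "f1 q \<subset> f2 r" using f2(2)[OF r2] unfolding C2_def by auto
        thus ?thesis using ph1[OF 1] ph2[OF r2] by auto
      next
        case 2
        hence "?hd (fst r) = 3" using h unfolding L2_def by simp
        thus ?thesis using hd2[OF rP] by simp
      qed
    qed
  qed
  have ord: "\<phi> p \<subseteq> \<phi> q" if "(p, q) \<in> blowup_le P x d" for p q
  proof -
    have "(p, q) \<in> {(a, b). blowup_edge P x d a b}\<^sup>*" using that unfolding blowup_le_def .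
    thus ?thesis
    proof (induction rule: rtrancl_induct)
      case base thus ?case by simp
    next
      case (step y z) thus ?case using edge by blast
    qed
  qed
  show ?thesis unfolding contains_blowup_def
    using inj img ord by blast
qed


lemma ab_height:
  assumes fP: "finite P" and xP: "x \<in> P"
  shows "1 + aP P x + bP P x \<le> height P"
proof -
  obtain U where U: "U \<subseteq> P" "\<forall>y\<in>U. x \<subset> y" "is_chain U" "card U = aP P x"
  proof (cases "\<exists>u\<in>P. \<exists>w\<in>P. x \<subset> u \<and> u \<subset> w")
    case True
    then obtain u w where uw: "u \<in> P" "w \<in> P" "x \<subset> u" "u \<subset> w" by blast
    have "card {u, w} = 2" using uw by auto
    moreover have "is_chain {u,w}" using uw unfolding is_chain_def by auto
    ultimately show ?thesis using that[of "{u,w}"] uw True unfolding aP_def by auto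
  next
    case F1: False
    show ?thesis
    proof (cases "\<exists>u\<in>P. x \<subset> u")
      case True
      then obtain u where u: "u \<in> P" "x \<subset> u" by blast
      show ?thesis using that[of "{u}"] u True F1 unfolding aP_def is_chain_def by auto
    next
      case False
      show ?thesis using that[of "{}"] False F1 unfolding aP_def is_chain_def by auto
    qed
  qed
  obtain D where D: "D \<subseteq> P" "\<forall>y\<in>D. y \<subset> x" "is_chain D" "card D = bP P x"
  proof (cases "\<exists>u\<in>P. \<exists>w\<in>P. w \<subset> u \<and> u \<subset> x")
    case True
    then obtain u w where uw: "u \<in> P" "w \<in> P" "w \<subset> u" "u \<subset> x" by blast
    have "card {u, w} = 2" using uw by auto
    moreover have "is_chain {u,w}" using uw unfolding is_chain_def by auto
    ultimately show ?thesis using that[of "{u,w}"] uw True unfolding bP_def by auto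
  next
    case F1: False
    show ?thesis
    proof (cases "\<exists>u\<in>P. u \<subset> x")
      case True
      then obtain u where u: "u \<in> P" "u \<subset> x" by blast
      show ?thesis using that[of "{u}"] u True F1 unfolding bP_def is_chain_def by auto
    next
      case False
      show ?thesis using that[of "{}"] False F1 unfolding bP_def is_chain_def by auto
    qed
  qed
  let ?C = "insert x (U \<union> D)"
  have fU: "finite U" "finite D" using U(1) D(1) fP finite_subset by blast+
  have disj: "U \<inter> D = {}" using U D by auto
  have xn: "x \<notin> U \<union> D" using U D by auto
  have cC: "card ?C = 1 + aP P x + bP P x"
    using card_insert_disjoint[of "U \<union> D" x] card_Un_disjoint[OF fU disj] fU xn U D by simp
  have chC: "is_chain ?C"
    unfolding is_chain_def
  proof (intro ballI)
    fix A B assume A: "A \<in> ?C" and B: "B \<in> ?C"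
    have Ux: "\<And>y. y \<in> U \<Longrightarrow> x \<subseteq> y" and Dx: "\<And>y. y \<in> D \<Longrightarrow> y \<subseteq> x" using U D by auto
    have cU: "\<And>A B. A \<in> U \<Longrightarrow> B \<in> U \<Longrightarrow> A \<subseteq> B \<or> B \<subseteq> A" using U unfolding is_chain_def by blast
    have cD: "\<And>A B. A \<in> D \<Longrightarrow> B \<in> D \<Longrightarrow> A \<subseteq> B \<or> B \<subseteq> A" using D unfolding is_chain_def by blast
    have "A = x \<or> A \<in> U \<or> A \<in> D" "B = x \<or> B \<in> U \<or> B \<in> D" using A B by auto
    thus "A \<subseteq> B \<or> B \<subseteq> A"
    proof (elim disjE)
    qed (use Ux Dx cU cD in \<open>(simp; fail) | (meson order_trans)\<close>)+
  qed
  have CP: "?C \<subseteq> P" using xP U D by auto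
  have fin: "finite {card C | C. C \<subseteq> P \<and> is_chain C}"
  proof -
    have "{card C | C. C \<subseteq> P \<and> is_chain C} \<subseteq> card ` Pow P" by auto
    thus ?thesis using fP finite_subset by blast
  qed
  have "card ?C \<in> {card C | C. C \<subseteq> P \<and> is_chain C}" using CP chC by blast
  hence "card ?C \<le> height P" unfolding height_def using fin by (simp add: Max_ge)
  thus ?thesis using cC by simp
qed

lemma aP_le: "aP P x \<le> 2" unfolding aP_def by auto
lemma bP_le: "bP P x \<le> 2" unfolding bP_def by auto

lemma lym_lower:
  assumes "card A \<le> n"
  shows "fact n \<le> lym n A * (n choose (n div 2))"
proof -
  have "fact n = fact (card A) * fact (n - card A) * (n choose card A)"
    using binomial_fact_lemma[OF assms] by simp
  also have "\<dots> \<le> fact (card A) * fact (n - card A) * (n choose (n div 2))"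
    by (intro mult_left_mono binomial_maximum) simp
  finally show ?thesis unfolding lym_def .
qed

lemma density_core:
  fixes F :: "nat set set"
  assumes FS: "F \<subseteq> Pow {1..n}" and n16: "16 \<le> n" and a2: "a \<le> 2" and b2: "b \<le> 2"
    and Gdef: "G = {A \<in> F. n \<le> 4 * card A \<and> 4 * card A \<le> 3 * n}"
    and ineq: "real (card G) * (real ((n div 4) choose 4) - 16 * real K)
               > real (4*(a+b)) * real (n choose (n div 2)) * real ((n div 4) choose 4)"
  shows "\<exists>X\<in>G. good F K a b X"
proof (rule ccontr)
  assume "\<not> (\<exists>X\<in>G. good F K a b X)"
  hence ng: "\<And>X. X \<in> G \<Longrightarrow> \<not> good F K a b X" by blast
  let ?S = "{1..n}"
  let ?M = "(n div 4) choose 4"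
  let ?C = "n choose (n div 2)"
  let ?R = "badR F K a b G"
  let ?\<Pi> = "permutations_of_set ?S"
  have fS: "finite ?S" and cS: "card ?S = n" by auto
  have fF: "finite F" using FS by (meson finite_Pow_iff finite_atLeastAtMost finite_subset)
  have GF: "G \<subseteq> F" using Gdef by auto
  have GS: "G \<subseteq> Pow ?S" using GF FS by auto
  have win: "\<And>A. A \<in> G \<Longrightarrow> n \<le> 4 * card A \<and> 4 * card A \<le> 3 * n" using Gdef by auto
  have pp: "card {k. k \<le> n \<and> set (take k xs) \<in> G}
     \<le> 4*(a+b) + 4 * card {(k,k'). k \<le> n \<and> k' \<le> n \<and> (set (take k xs), set (take k' xs)) \<in> ?R}"
    if "xs \<in> ?\<Pi>" for xs
    using per_perm[OF that GF ng a2 b2] cS by simp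
  have s1: "(\<Sum>xs\<in>?\<Pi>. card {k. k \<le> n \<and> set (take k xs) \<in> G}) = sum (lym n) G"
    using sum_prefix_count[OF fS GS] cS unfolding lym_def by simp
  have Rsub: "?R \<subseteq> {(A,B). A \<subseteq> B \<and> B \<subseteq> ?S}" using GS unfolding badR_def by auto
  have s2: "(\<Sum>xs\<in>?\<Pi>. card {(k,k'). k \<le> n \<and> k' \<le> n \<and> (set (take k xs), set (take k' xs)) \<in> ?R}) = sum (wgt n) ?R"
    using sum_pair_count[OF fS Rsub] cS unfolding wgt_def by (simp add: case_prod_beta')
  have "sum (lym n) G \<le> (\<Sum>xs\<in>?\<Pi>. 4*(a+b) + 4 * card {(k,k'). k \<le> n \<and> k' \<le> n \<and> (set (take k xs), set (take k' xs)) \<in> ?R})"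
    unfolding s1[symmetric] by (rule sum_mono) (rule pp)
  also have "\<dots> = 4*(a+b) * fact n + 4 * sum (wgt n) ?R"
    using s2 cS by (simp add: sum.distrib sum_distrib_left[symmetric])
  finally have L1: "sum (lym n) G \<le> 4*(a+b) * fact n + 4 * sum (wgt n) ?R" .
  have L2: "?M * sum (wgt n) ?R \<le> 4 * K * sum (lym n) G"
    by (rule badR_bound[OF fF GF n16 win])
  have L3: "card G * fact n \<le> sum (lym n) G * ?C"
  proof -
    have "card G * fact n = (\<Sum>A\<in>G. fact n)" by simp
    also have "\<dots> \<le> (\<Sum>A\<in>G. lym n A * ?C)"
    proof (rule sum_mono)
      fix A assume "A \<in> G"
      hence "card A \<le> n" using GS cS card_mono fS by (metis PowD subsetD)
      thus "fact n \<le> lym n A * ?C" by (rule lym_lower)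
    qed
    also have "\<dots> = sum (lym n) G * ?C" by (simp add: sum_distrib_right)
    finally show ?thesis .
  qed
  define \<Lambda> where "\<Lambda> = real (sum (lym n) G)"
  define W where "W = real (sum (wgt n) ?R)"
  have R1: "\<Lambda> \<le> real (4*(a+b)) * fact n + 4 * W"
  proof -
    have "real (sum (lym n) G) \<le> real (4*(a+b) * fact n + 4 * sum (wgt n) ?R)" using L1 of_nat_le_iff by blast
    thus ?thesis unfolding \<Lambda>_def W_def by simp
  qed
  have R2: "real ?M * W \<le> 4 * real K * \<Lambda>"
  proof -
    have "real (?M * sum (wgt n) ?R) \<le> real (4 * K * sum (lym n) G)" using L2 of_nat_le_iff by blast
    thus ?thesis unfolding \<Lambda>_def W_def by simp
  qed
  have R3: "real (card G) * fact n \<le> \<Lambda> * real ?C"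
  proof -
    have "real (card G * fact n) \<le> real (sum (lym n) G * ?C)" using L3 of_nat_le_iff by blast
    thus ?thesis unfolding \<Lambda>_def by simp
  qed
  have Mpos: "real ?M - 16 * real K > 0"
  proof (rule ccontr)
    assume "\<not> real ?M - 16 * real K > 0"
    hence "real (card G) * (real ?M - 16 * real K) \<le> 0" by (simp add: mult_nonneg_nonpos)
    moreover have "real (4*(a+b)) * real ?C * real ?M \<ge> 0" by simp
    ultimately show False using ineq by linarith
  qed
  have "real ?M * \<Lambda> \<le> real ?M * (real (4*(a+b)) * fact n + 4 * W)"
    by (rule mult_left_mono[OF R1]) simp
  also have "\<dots> = real ?M * (real (4*(a+b)) * fact n) + 4 * (real ?M * W)"
    by (simp add: algebra_simps)
  also have "\<dots> \<le> real ?M * (real (4*(a+b)) * fact n) + 16 * real K * \<Lambda>" using R2 by linarith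
  finally have "\<Lambda> * (real ?M - 16 * real K) \<le> real (4*(a+b)) * fact n * real ?M" by (simp add: algebra_simps)
  hence "\<Lambda> * (real ?M - 16 * real K) * real ?C \<le> real (4*(a+b)) * fact n * real ?M * real ?C"
    by (rule mult_right_mono) simp
  hence "\<Lambda> * real ?C * (real ?M - 16 * real K) \<le> real (4*(a+b)) * fact n * real ?M * real ?C"
    by (simp add: algebra_simps)
  moreover have "real (card G) * fact n * (real ?M - 16 * real K) \<le> \<Lambda> * real ?C * (real ?M - 16 * real K)"
    using R3 Mpos by (simp add: mult_right_mono)
  ultimately have "fact n * (real (card G) * (real ?M - 16 * real K)) \<le> fact n * (real (4*(a+b)) * real ?C * real ?M)"
    by (simp add: algebra_simps)
  hence "real (card G) * (real ?M - 16 * real K) \<le> real (4*(a+b)) * real ?C * real ?M"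
    by (simp add: mult_le_cancel_left)
  thus False using ineq by linarith
qed


lemma binom_double:
  assumes "3 * i + 2 \<le> n"
  shows "2 * (n choose i) \<le> n choose (Suc i)"
proof -
  have e: "Suc i * (n choose Suc i) = (n - i) * (n choose i)"
    using binomial_absorption[of i n] binomial_absorb_comp[of n i] by simp
  have "2 * Suc i \<le> n - i" using assms by arith
  hence "(2 * Suc i) * (n choose i) \<le> (n - i) * (n choose i)" by (rule mult_right_mono) simp
  hence "Suc i * (2 * (n choose i)) \<le> (n - i) * (n choose i)" by (simp add: algebra_simps)
  also have "\<dots> = Suc i * (n choose Suc i)" using e by simp
  finally show ?thesis by (simp only: mult_le_cancel1)
qed

lemma binom_pow:
  shows "k + j \<le> n div 3 \<Longrightarrow> 2^j * (n choose k) \<le> n choose (k + j)"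
proof (induction j)
  case 0 thus ?case by simp
next
  case (Suc j)
  have "2^j * (n choose k) \<le> n choose (k + j)" using Suc by simp
  moreover have "2 * (n choose (k + j)) \<le> n choose Suc (k + j)"
  proof (rule binom_double)
    have "3 * (n div 3) \<le> n" by simp
    thus "3 * (k + j) + 2 \<le> n" using Suc.prems by arith
  qed
  ultimately show ?case by simp
qed

lemma tail_single:
  assumes "4 * k < n \<or> (3 * n < 4 * k \<and> k \<le> n)"
  shows "2^(n div 3 - n div 4) * (n choose k) \<le> n choose (n div 2)"
proof -
  have low: "2^(n div 3 - n div 4) * (n choose k') \<le> n choose (n div 2)" if "4 * k' < n" for k'
  proof -
    have k': "k' \<le> n div 4" using that by linarith
    have "2^(n div 3 - n div 4) * (n choose k') \<le> 2^(n div 3 - k') * (n choose k')"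
      using k' by (intro mult_right_mono power_increasing) auto
    also have "\<dots> \<le> n choose (k' + (n div 3 - k'))"
      by (rule binom_pow) (use k' in linarith)
    also have "\<dots> \<le> n choose (n div 2)" by (rule binomial_maximum)
    finally show ?thesis .
  qed
  from assms show ?thesis
  proof
    assume "4 * k < n" thus ?thesis using low by blast
  next
    assume h: "3 * n < 4 * k \<and> k \<le> n"
    hence "n choose k = n choose (n - k)" using binomial_symmetric by blast
    moreover have "4 * (n - k) < n" using h by linarith
    ultimately show ?thesis using low by simp
  qed
qed

lemma tail_count:
  "2^(n div 3 - n div 4) * card {A. A \<subseteq> {1..n} \<and> \<not> (n \<le> 4 * card A \<and> 4 * card A \<le> 3 * n)}
     \<le> (n + 1) * (n choose (n div 2))"
proof -
  let ?S = "{1..n::nat}"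
  let ?Kb = "{k. k \<le> n \<and> \<not> (n \<le> 4 * k \<and> 4 * k \<le> 3 * n)}"
  let ?T = "{A. A \<subseteq> ?S \<and> \<not> (n \<le> 4 * card A \<and> 4 * card A \<le> 3 * n)}"
  have T: "?T = (\<Union>k\<in>?Kb. {A. A \<subseteq> ?S \<and> card A = k})"
  proof
    show "?T \<subseteq> (\<Union>k\<in>?Kb. {A. A \<subseteq> ?S \<and> card A = k})"
    proof
      fix A assume A: "A \<in> ?T"
      hence "card A \<le> n" using card_mono[of ?S A] by auto
      thus "A \<in> (\<Union>k\<in>?Kb. {A. A \<subseteq> ?S \<and> card A = k})" using A by auto
    qed
  qed auto
  have fK: "finite ?Kb" by (rule finite_subset[of _ "{..n}"]) auto
  have "card ?T \<le> (\<Sum>k\<in>?Kb. card {A. A \<subseteq> ?S \<and> card A = k})"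
    unfolding T by (rule card_UN_le[OF fK])
  also have "\<dots> = (\<Sum>k\<in>?Kb. n choose k)" using n_subsets[of ?S] by simp
  finally have c1: "card ?T \<le> (\<Sum>k\<in>?Kb. n choose k)" .
  have "2^(n div 3 - n div 4) * card ?T \<le> 2^(n div 3 - n div 4) * (\<Sum>k\<in>?Kb. n choose k)"
    using c1 by simp
  also have "\<dots> = (\<Sum>k\<in>?Kb. 2^(n div 3 - n div 4) * (n choose k))" by (simp add: sum_distrib_left)
  also have "\<dots> \<le> (\<Sum>k\<in>?Kb. n choose (n div 2))"
  proof (rule sum_mono)
    fix k assume "k \<in> ?Kb"
    hence "4 * k < n \<or> (3 * n < 4 * k \<and> k \<le> n)" by auto
    thus "2^(n div 3 - n div 4) * (n choose k) \<le> n choose (n div 2)" by (rule tail_single)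
  qed
  also have "\<dots> = card ?Kb * (n choose (n div 2))" by simp
  also have "\<dots> \<le> (n + 1) * (n choose (n div 2))"
  proof -
    have "card ?Kb \<le> card {..n}" by (rule card_mono) auto
    hence "card ?Kb \<le> n + 1" by simp
    thus ?thesis by (rule mult_right_mono) simp
  qed
  finally show ?thesis .
qed

lemma tail_eventually:
  assumes "\<epsilon> > 0"
  shows "eventually (\<lambda>n. real (n + 1) \<le> \<epsilon> * 2^(n div 3 - n div 4)) sequentially"
proof -
  have lim: "(\<lambda>n::nat. (real n + 1) / 2 powr (real n / 12 - 1)) \<longlonglongrightarrow> 0" by real_asymp
  hence "eventually (\<lambda>n. (real n + 1) / 2 powr (real n / 12 - 1) < \<epsilon>) sequentially"
    using assms by (rule order_tendstoD)
  thus ?thesis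
  proof (rule eventually_mono)
    fix n :: nat assume h: "(real n + 1) / 2 powr (real n / 12 - 1) < \<epsilon>"
    have pos: "2 powr (real n / 12 - 1) > 0" by simp
    have "real (n div 3) \<ge> real n / 3 - 1" by linarith
    moreover have "real (n div 4) \<le> real n / 4" by linarith
    moreover have "n div 4 \<le> n div 3" by (simp add: div_le_mono2)
    ultimately have ex: "real (n div 3 - n div 4) \<ge> real n / 12 - 1" by (simp add: of_nat_diff)
    have "2 powr (real n / 12 - 1) \<le> 2 powr real (n div 3 - n div 4)"
      using ex by (intro powr_mono) auto
    also have "\<dots> = 2 ^ (n div 3 - n div 4)" by (rule powr_realpow) simp
    finally have p: "2 powr (real n / 12 - 1) \<le> 2 ^ (n div 3 - n div 4)" .
    have "real n + 1 < \<epsilon> * 2 powr (real n / 12 - 1)" using h pos by (simp add: divide_less_eq)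
    also have "\<dots> \<le> \<epsilon> * 2 ^ (n div 3 - n div 4)" using p assms by (simp add: mult_left_mono)
    finally show "real (n + 1) \<le> \<epsilon> * 2^(n div 3 - n div 4)" by simp
  qed
qed

lemma binom4_lower:
  assumes "4 \<le> m"
  shows "(real m / 4)^4 \<le> real (m choose 4)"
proof -
  have "(real m / of_nat 4)^4 \<le> real m gchoose 4"
    by (rule gbinomial_ge_n_over_k_pow_k) (use assms in simp)
  thus ?thesis by (simp add: binomial_gbinomial)
qed

lemma M_eventually:
  assumes "\<delta> > 0"
  shows "eventually (\<lambda>n. c * (real n powr 1.9)^2 \<le> \<delta> * real ((n div 4) choose 4)) sequentially"
proof -
  have lim: "(\<lambda>n::nat. (real n powr 1.9)^2 / ((real n / 4 - 1) / 4)^4) \<longlonglongrightarrow> 0" by real_asymp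
  hence "(\<lambda>n::nat. \<bar>c\<bar> * ((real n powr 1.9)^2 / ((real n / 4 - 1) / 4)^4)) \<longlonglongrightarrow> 0"
    by (rule tendsto_mult_right_zero)
  hence ev1: "eventually (\<lambda>n. \<bar>c\<bar> * ((real n powr 1.9)^2 / ((real n / 4 - 1) / 4)^4) < \<delta>) sequentially"
    using assms by (rule order_tendstoD)
  have ev2: "eventually (\<lambda>n::nat. n \<ge> 32) sequentially" by (rule eventually_ge_at_top)
  show ?thesis using eventually_conj[OF ev1 ev2]
  proof (rule eventually_mono)
    fix n :: nat assume hn: "\<bar>c\<bar> * ((real n powr 1.9)^2 / ((real n / 4 - 1) / 4)^4) < \<delta> \<and> n \<ge> 32"
    hence h: "\<bar>c\<bar> * ((real n powr 1.9)^2 / ((real n / 4 - 1) / 4)^4) < \<delta>" and n: "n \<ge> 32" by auto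
    have q: "(real n / 4 - 1) / 4 > 0" using n by simp
    have "real (n div 4) \<ge> real n / 4 - 1" by linarith
    hence "((real n / 4 - 1) / 4)^4 \<le> (real (n div 4) / 4)^4"
      using q by (intro power_mono) auto
    also have "\<dots> \<le> real ((n div 4) choose 4)" by (rule binom4_lower) (use n in linarith)
    finally have b: "((real n / 4 - 1) / 4)^4 \<le> real ((n div 4) choose 4)" .
    have "c * (real n powr 1.9)^2 \<le> \<bar>c\<bar> * (real n powr 1.9)^2" by (simp add: mult_right_mono)
    also have "\<dots> = (\<bar>c\<bar> * ((real n powr 1.9)^2 / ((real n / 4 - 1) / 4)^4)) * ((real n / 4 - 1) / 4)^4"
      using q by (simp add: field_simps)
    also have "\<dots> \<le> \<delta> * ((real n / 4 - 1) / 4)^4"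
      using h q by (intro mult_right_mono) auto
    also have "\<dots> \<le> \<delta> * real ((n div 4) choose 4)" using b assms by (simp add: mult_left_mono)
    finally show "c * (real n powr 1.9)^2 \<le> \<delta> * real ((n div 4) choose 4)" .
  qed
qed


lemma blowup_card:
  assumes fP: "finite P" and rad: "\<forall>y\<in>P. hdist_le P x y 2" and d1: "1 \<le> d"
  shows "card (blowup_elems P x d) \<le> card P * d^2"
proof -
  have "blowup_elems P x d \<subseteq> P \<times> {..<d^2}"
  proof
    fix p assume p: "p \<in> blowup_elems P x d"
    hence "fst p \<in> P" "snd p < d ^ hdist P x (fst p)" unfolding blowup_elems_def by auto
    moreover have "hdist P x (fst p) \<le> 2" using hdist_path rad calculation(1) by blast
    hence "d ^ hdist P x (fst p) \<le> d ^ 2" using d1 by (intro power_increasing) auto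
    ultimately show "p \<in> P \<times> {..<d^2}" by (cases p) auto
  qed
  hence "card (blowup_elems P x d) \<le> card (P \<times> {..<d^2})" using fP by (intro card_mono) auto
  thus ?thesis by (simp add: card_cartesian_product)
qed

theorem lemma1p9:
  fixes P :: "'a set set" and x :: "'a set"
  assumes "finite P" and "\<forall>A\<in>P. finite A"
    and "tree_poset P" and "height P \<le> 5" and "radius_le P 2"
    and "x \<in> P" and "\<forall>y\<in>P. hdist_le P x y 2"
  shows "\<forall>\<epsilon>::real. \<epsilon> > 0 \<longrightarrow> (\<exists>N::nat. \<forall>n\<ge>N. \<forall>F :: nat set set.
           F \<subseteq> Pow {1..n} \<and>
           real (card F) \<ge> 4 * (real (height P) - 1 + \<epsilon>) * real (n choose (n div 2))
           \<longrightarrow> contains_blowup F P x (nat \<lfloor>real n powr 1.9\<rfloor>))"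
proof (intro allI impI)
  fix \<epsilon> :: real assume \<epsilon>: "\<epsilon> > 0"
  note fP = assms(1) and tree = assms(3) and xP = assms(6) and rad = assms(7)
  define a where "a = aP P x"
  define b where "b = bP P x"
  have ab: "1 + a + b \<le> height P" unfolding a_def b_def by (rule ab_height[OF fP xP])
  have a2: "a \<le> 2" and b2: "b \<le> 2" unfolding a_def b_def by (rule aP_le, rule bP_le)
  define e where "e = min \<epsilon> 1"
  have e0: "e > 0" and e1: "e \<le> 1" and ee: "e \<le> \<epsilon>" using \<epsilon> unfolding e_def by auto
  define \<delta> where "\<delta> = e / 32"
  have \<delta>0: "\<delta> > 0" unfolding \<delta>_def using e0 by simp
  have ev: "eventually (\<lambda>n. n \<ge> 16 \<and> real (n + 1) \<le> e * 2^(n div 3 - n div 4) \<and>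
      (16 * real (card P)) * (real n powr 1.9)^2 \<le> \<delta> * real ((n div 4) choose 4)) sequentially"
    using eventually_ge_at_top[of 16] tail_eventually[OF e0] M_eventually[OF \<delta>0, of "16 * real (card P)"]
    by (auto intro: eventually_conj)
  then obtain N where N: "\<And>n. n \<ge> N \<Longrightarrow> n \<ge> 16 \<and> real (n + 1) \<le> e * 2^(n div 3 - n div 4) \<and>
      (16 * real (card P)) * (real n powr 1.9)^2 \<le> \<delta> * real ((n div 4) choose 4)"
    unfolding eventually_sequentially by blast
  show "\<exists>N::nat. \<forall>n\<ge>N. \<forall>F :: nat set set.
           F \<subseteq> Pow {1..n} \<and>
           real (card F) \<ge> 4 * (real (height P) - 1 + \<epsilon>) * real (n choose (n div 2))
           \<longrightarrow> contains_blowup F P x (nat \<lfloor>real n powr 1.9\<rfloor>)"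
  proof (intro exI[of _ N] allI impI, elim conjE)
    fix n :: nat and F :: "nat set set"
    assume nN: "n \<ge> N" and FS: "F \<subseteq> Pow {1..n}"
      and cF: "real (card F) \<ge> 4 * (real (height P) - 1 + \<epsilon>) * real (n choose (n div 2))"
    have n16: "n \<ge> 16" and tl: "real (n + 1) \<le> e * 2^(n div 3 - n div 4)"
      and Mb: "(16 * real (card P)) * (real n powr 1.9)^2 \<le> \<delta> * real ((n div 4) choose 4)"
      using N[OF nN] by auto
    define d where "d = nat \<lfloor>real n powr 1.9\<rfloor>"
    have np: "real n powr 1.9 \<ge> 1" using n16 by (intro ge_one_powr_ge_zero) auto
    have d1: "1 \<le> d" unfolding d_def using np by linarith
    have dle: "real d \<le> real n powr 1.9" unfolding d_def using np by linarith
    define K where "K = card (blowup_elems P x d)"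
    have KP: "K \<le> card P * d^2" unfolding K_def by (rule blowup_card[OF fP rad d1])
    define C where "C = n choose (n div 2)"
    define M where "M = (n div 4) choose 4"
    have Cpos: "real C > 0" unfolding C_def by simp
    have Mpos: "real M > 0" unfolding M_def using n16 by simp
    have K16: "16 * real K \<le> \<delta> * real M"
    proof -
      have "real K \<le> real (card P) * (real d)^2" using KP by (metis of_nat_le_iff of_nat_mult of_nat_power)
      also have "\<dots> \<le> real (card P) * (real n powr 1.9)^2"
        by (intro mult_left_mono power_mono dle) auto
      finally have "16 * real K \<le> (16 * real (card P)) * (real n powr 1.9)^2" by simp
      thus ?thesis using Mb unfolding M_def by linarith
    qed
    define G where "G = {A \<in> F. n \<le> 4 * card A \<and> 4 * card A \<le> 3 * n}"
    define T where "T = {A. A \<subseteq> {1..n} \<and> \<not> (n \<le> 4 * card A \<and> 4 * card A \<le> 3 * n)}"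
    have fF: "finite F" using FS by (meson finite_Pow_iff finite_atLeastAtMost finite_subset)
    have FGT: "F \<subseteq> G \<union> T" using FS unfolding G_def T_def by auto
    have fT: "finite T" unfolding T_def by (rule finite_subset[of _ "Pow {1..n}"]) auto
    have fG: "finite G" using fF unfolding G_def by simp
    have "card F \<le> card G + card T" using card_mono[OF _ FGT] card_Un_le[of G T] fG fT by fastforce
    hence cFGT: "real (card F) \<le> real (card G) + real (card T)" by simp
    have tc: "2^(n div 3 - n div 4) * card T \<le> (n + 1) * C"
      unfolding T_def C_def by (rule tail_count)
    have Tb: "real (card T) \<le> e * real C"
    proof -
      have "real (2^(n div 3 - n div 4)) * real (card T) \<le> real (n + 1) * real C"
        using tc by (metis of_nat_le_iff of_nat_mult)
      also have "\<dots> \<le> e * 2^(n div 3 - n div 4) * real C" using tl Cpos by (intro mult_right_mono) auto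
      finally have "2^(n div 3 - n div 4) * real (card T) \<le> 2^(n div 3 - n div 4) * (e * real C)"
        by (simp add: algebra_simps)
      thus ?thesis by simp
    qed
    have habr: "real a + real b \<le> real (height P) - 1" using ab by linarith
    have cG: "real (card G) \<ge> (4 * real (a + b) + 3 * e) * real C"
    proof -
      have "(4 * real (a + b) + 4 * e) * real C \<le> 4 * (real (height P) - 1 + \<epsilon>) * real C"
        using habr ee Cpos by (intro mult_right_mono) auto
      thus ?thesis using cF cFGT Tb unfolding C_def by (simp add: algebra_simps)
    qed
    have Mk: "real M - 16 * real K \<ge> (1 - \<delta>) * real M" using K16 by (simp add: algebra_simps)
    have d1': "1 - \<delta> > 0" using e1 unfolding \<delta>_def by simp
    have key: "(4 * real (a + b) + 3 * e) * (1 - \<delta>) > 4 * real (a + b)"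
    proof -
      have "real (a + b) \<le> 4" using a2 b2 by simp
      hence "\<delta> * (4 * real (a + b) + 3 * e) \<le> e / 32 * (16 + 3)" unfolding \<delta>_def using e0 e1
        by (intro mult_left_mono) auto
      also have "\<dots> < 3 * e" using e0 by simp
      finally show ?thesis by (simp add: algebra_simps)
    qed
    have "real (card G) * (real M - 16 * real K) \<ge> (4 * real (a + b) + 3 * e) * real C * ((1 - \<delta>) * real M)"
      using cG Mk d1' Mpos Cpos by (intro mult_mono) auto
    moreover have "(4 * real (a + b) + 3 * e) * real C * ((1 - \<delta>) * real M)
        = ((4 * real (a + b) + 3 * e) * (1 - \<delta>)) * (real C * real M)" by (simp add: algebra_simps)
    moreover have "((4 * real (a + b) + 3 * e) * (1 - \<delta>)) * (real C * real M) > 4 * real (a + b) * (real C * real M)"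
      using key Cpos Mpos by (intro mult_strict_right_mono) auto
    ultimately have ineq: "real (card G) * (real M - 16 * real K) > real (4*(a+b)) * real C * real M"
      by (simp add: algebra_simps)
    obtain X where X: "X \<in> G" "good F K a b X"
      using density_core[OF FS n16 a2 b2 G_def] ineq unfolding C_def M_def by blast
    have XF: "X \<in> F" using X unfolding G_def by simp
    show "contains_blowup F P x (nat \<lfloor>real n powr 1.9\<rfloor>)"
      using embed[OF fP tree xP rad d1 fF XF K_def] X(2) unfolding a_def b_def d_def by simp
  qed
qed

end
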